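(* Let $n\equiv 0\pmod 4$, $n\ge 4$. Let $w:=e_0e_1\cdots e_n\in \mathrm{C}^{0,n+1}$ (central, $w^2=1$), $\hbar_\pm:=\tfrac{1\pm w}{2}$, and let $\tau$ be the algebra automorphism of $\mathrm{C}^{0,n+1}$ with $\tau(e_i)=-e_i$ for all $i$. Choose a primitive idempotent $\wp_+\in\mathrm{C}^{0,n+1}\hbar_+$ and put $\wp_-:=\tau(\wp_+)$, $E_\pm:=\mathrm{C}^{0,n+1}\wp_\pm$, and $P_n^\pm:=\ker(\Phi:A_n\otimes_\mathbb{R}E_\pm\to A_n\otimes_\mathbb{R}E_\pm)$. Then the orthogonal sum $(P_n^+,\hat\beta|_{P_n^+})\perp(P_n^-,\hat\beta|_{P_n^-})$ is isometric to the trivial form $N\langle 1\rangle$ over $S^n=\operatorname{Spec}A_n$, where $N=\dim_\mathbb{R}E_+$ $(=2^{\delta(n+1)})$.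
   Context: $A_n:=\mathbb{R}[x_0,\dots,x_n]/(\sum_i x_i^2-1)$. $\mathrm{C}^{0,n+1}$ is the real Clifford algebra on $e_0,\dots,e_n$ with $e_i^2=1$, $e_ie_j=-e_je_i$ ($i\ne j$). $\Phi$ is left multiplication by $\tfrac12(1+\sum_i x_i\otimes e_i)$ on $A_n\otimes_\mathbb{R}E_\pm$. $\sigma$ is the reversing involution ($\sigma(e_i)=e_i$, $\sigma(xy)=\sigma(y)\sigma(x)$), $\beta(x,y)=\operatorname{Tr}(\sigma(x)y)$ the trace form, and $\hat\beta(a\otimes x,b\otimes y)=ab\,\beta(x,y)$. $\langle 1\rangle$ is the unit symmetric form on $A_n$. $\delta(k)$ is the integer with $2^{\delta(k)}$ the real dimension of an irreducible module over the Clifford algebra $\mathrm{C}^{k-1,0}$. *)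

theory Defs
  imports Complex_Main
begin

text \<open>A_n = R[x_0..x_n]/(sum x_i^2 - 1) is realised as the ring of polynomial
  functions on the sphere S^n (extensionally zero off the sphere).\<close>

definition sph :: "nat \<Rightarrow> (nat \<Rightarrow> real) set" where
  "sph n = {x. (\<forall>i>n. x i = 0) \<and> (\<Sum>i\<le>n. (x i)^2) = 1}"

inductive_set polyfun :: "nat \<Rightarrow> ((nat \<Rightarrow> real) \<Rightarrow> real) set" for n where
  pf_const: "(\<lambda>x. c) \<in> polyfun n"
| pf_var: "i \<le> n \<Longrightarrow> (\<lambda>x. x i) \<in> polyfun n"
| pf_add: "p \<in> polyfun n \<Longrightarrow> q \<in> polyfun n \<Longrightarrow> (\<lambda>x. p x + q x) \<in> polyfun n"
| pf_mult: "p \<in> polyfun n \<Longrightarrow> q \<in> polyfun n \<Longrightarrow> (\<lambda>x. p x * q x) \<in> polyfun n"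

definition An :: "nat \<Rightarrow> ((nat \<Rightarrow> real) \<Rightarrow> real) set" where
  "An n = {f. \<exists>p\<in>polyfun n. f = (\<lambda>x. if x \<in> sph n then p x else 0)}"

definition An_pow :: "nat \<Rightarrow> nat \<Rightarrow> (nat \<Rightarrow> (nat \<Rightarrow> real) \<Rightarrow> real) set" where
  "An_pow n N = {v. (\<forall>i<N. v i \<in> An n) \<and> (\<forall>i\<ge>N. v i = (\<lambda>x. 0))}"

text \<open>An element is given by its coordinates w.r.t. the basis e_S = e_{s_1}...e_{s_k}
  (s_1 < ... < s_k), S a subset of {0..n}.\<close>
type_synonym cl = "nat set \<Rightarrow> real"

definition Cl :: "nat \<Rightarrow> cl set" where
  "Cl n = {a. \<forall>S. \<not> S \<subseteq> {..n} \<longrightarrow> a S = 0}"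

definition cl_zero :: cl where "cl_zero = (\<lambda>S. 0)"
definition cl_one :: cl where "cl_one = (\<lambda>S. if S = {} then 1 else 0)"
definition cl_gen :: "nat \<Rightarrow> cl" where "cl_gen i = (\<lambda>S. if S = {i} then 1 else 0)"
definition cl_basis :: "nat set \<Rightarrow> cl" where "cl_basis T = (\<lambda>S. if S = T then 1 else 0)"
definition cl_add :: "cl \<Rightarrow> cl \<Rightarrow> cl" where "cl_add a b = (\<lambda>S. a S + b S)"
definition cl_scale :: "real \<Rightarrow> cl \<Rightarrow> cl" where "cl_scale r a = (\<lambda>S. r * a S)"

text \<open>Sign of e_S e_T = sign * e_{S symdiff T} (using e_i^2 = 1, e_i e_j = - e_j e_i).\<close>
definition cl_sign :: "nat set \<Rightarrow> nat set \<Rightarrow> real" where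
  "cl_sign S T = (-1) ^ card {(s, t). s \<in> S \<and> t \<in> T \<and> t < s}"

definition cl_mult :: "nat \<Rightarrow> cl \<Rightarrow> cl \<Rightarrow> cl" where
  "cl_mult n a b = (\<lambda>U. \<Sum>S\<in>Pow {..n}. \<Sum>T\<in>Pow {..n}.
      if (S - T) \<union> (T - S) = U then cl_sign S T * a S * b T else 0)"

definition cl_w :: "nat \<Rightarrow> cl" where
  "cl_w n = foldr (cl_mult n) (map cl_gen [0..<Suc n]) cl_one"

definition hbar_plus :: "nat \<Rightarrow> cl" where
  "hbar_plus n = cl_scale (1/2) (cl_add cl_one (cl_w n))"

text \<open>tau: algebra automorphism with tau(e_i) = -e_i, i.e. (-1)^|S| on e_S.\<close>
definition cl_tau :: "cl \<Rightarrow> cl" where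
  "cl_tau a = (\<lambda>S. (-1) ^ card S * a S)"

text \<open>sigma: reversion, sigma(e_S) = (-1)^(k(k-1)/2) e_S for |S| = k.\<close>
definition cl_rev :: "cl \<Rightarrow> cl" where
  "cl_rev a = (\<lambda>S. (-1) ^ (card S * (card S - 1) div 2) * a S)"

definition cl_tr :: "nat \<Rightarrow> cl \<Rightarrow> real" where
  "cl_tr n a = (\<Sum>S\<in>Pow {..n}. cl_mult n a (cl_basis S) S)"

definition cl_beta :: "nat \<Rightarrow> cl \<Rightarrow> cl \<Rightarrow> real" where
  "cl_beta n x y = cl_tr n (cl_mult n (cl_rev x) y)"

definition is_idem :: "nat \<Rightarrow> cl \<Rightarrow> bool" where
  "is_idem n p \<longleftrightarrow> p \<in> Cl n \<and> cl_mult n p p = p"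

definition primitive_idem :: "nat \<Rightarrow> cl \<Rightarrow> bool" where
  "primitive_idem n p \<longleftrightarrow> is_idem n p \<and> p \<noteq> cl_zero \<and>
     \<not> (\<exists>q r. is_idem n q \<and> is_idem n r \<and> q \<noteq> cl_zero \<and> r \<noteq> cl_zero \<and>
            cl_mult n q r = cl_zero \<and> cl_mult n r q = cl_zero \<and> p = cl_add q r)"

definition left_ideal :: "nat \<Rightarrow> cl \<Rightarrow> cl set" where
  "left_ideal n p = {cl_mult n c p | c. c \<in> Cl n}"

definition has_real_dim :: "cl set \<Rightarrow> nat \<Rightarrow> bool" where
  "has_real_dim E N \<longleftrightarrow> (\<exists>b :: nat \<Rightarrow> cl. (\<forall>i<N. b i \<in> E) \<and>
     (\<forall>c. (\<lambda>S. \<Sum>i<N. c i * b i S) = cl_zero \<longrightarrow> (\<forall>i<N. c i = 0)) \<and>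
     (\<forall>v\<in>E. \<exists>c. v = (\<lambda>S. \<Sum>i<N. c i * b i S)))"

type_synonym sec = "(nat \<Rightarrow> real) \<Rightarrow> cl"

text \<open>A_n \<otimes>_R E as the finite sums of elementary tensors a \<otimes> v, realised as
  C-valued functions on the sphere.\<close>
definition tensA :: "nat \<Rightarrow> cl set \<Rightarrow> sec set" where
  "tensA n E = {u. \<exists>m (a :: nat \<Rightarrow> (nat \<Rightarrow> real) \<Rightarrow> real) (v :: nat \<Rightarrow> cl).
      (\<forall>k<m. a k \<in> An n \<and> v k \<in> E) \<and> u = (\<lambda>x S. \<Sum>k<m. a k x * v k S)}"

definition phi_at :: "nat \<Rightarrow> (nat \<Rightarrow> real) \<Rightarrow> cl" where
  "phi_at n x = cl_scale (1/2) (\<lambda>S. cl_one S + (\<Sum>i\<le>n. x i * cl_gen i S))"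

definition Phi :: "nat \<Rightarrow> sec \<Rightarrow> sec" where
  "Phi n u = (\<lambda>x. if x \<in> sph n then cl_mult n (phi_at n x) (u x) else cl_zero)"

definition Pker :: "nat \<Rightarrow> cl set \<Rightarrow> sec set" where
  "Pker n E = {u \<in> tensA n E. Phi n u = (\<lambda>x. cl_zero)}"

text \<open>hat beta (a \<otimes> x, b \<otimes> y) = a b beta(x,y), extended bilinearly.\<close>
definition betahat :: "nat \<Rightarrow> sec \<Rightarrow> sec \<Rightarrow> (nat \<Rightarrow> real) \<Rightarrow> real" where
  "betahat n u v = (\<lambda>x. cl_beta n (u x) (v x))"

text \<open>(M, b) (orthogonal sum of (P_+, b) and (P_-, b)) is isometric to N<1> over A_n:
  there is an A_n-linear bijection onto A_n^N carrying the form to sum_i a_i b_i.\<close>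
definition orth_sum_isometric_trivial :: "nat \<Rightarrow> sec set \<Rightarrow> sec set \<Rightarrow> nat \<Rightarrow> bool" where
  "orth_sum_isometric_trivial n Pp Pm N \<longleftrightarrow>
    (\<exists>\<Psi> :: sec \<times> sec \<Rightarrow> nat \<Rightarrow> (nat \<Rightarrow> real) \<Rightarrow> real.
       bij_betw \<Psi> (Pp \<times> Pm) (An_pow n N) \<and>
       (\<forall>z\<in>Pp \<times> Pm. \<forall>z'\<in>Pp \<times> Pm.
          \<Psi> ((\<lambda>x. cl_add (fst z x) (fst z' x)), (\<lambda>x. cl_add (snd z x) (snd z' x)))
            = (\<lambda>i x. \<Psi> z i x + \<Psi> z' i x)) \<and>
       (\<forall>a\<in>An n. \<forall>z\<in>Pp \<times> Pm.
          \<Psi> ((\<lambda>x. cl_scale (a x) (fst z x)), (\<lambda>x. cl_scale (a x) (snd z x)))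
            = (\<lambda>i x. a x * \<Psi> z i x)) \<and>
       (\<forall>z\<in>Pp \<times> Pm. \<forall>z'\<in>Pp \<times> Pm.
          (\<lambda>x. betahat n (fst z) (fst z') x + betahat n (snd z) (snd z') x)
            = (\<lambda>x. \<Sum>i<N. \<Psi> z i x * \<Psi> z' i x)))"

end

theory Submission
  imports Defs
begin

definition sd :: "nat set \<Rightarrow> nat set \<Rightarrow> nat set" where
  "sd S T = (S - T) \<union> (T - S)"

definition invs :: "nat set \<Rightarrow> nat set \<Rightarrow> (nat \<times> nat) set" where
  "invs S T = {(s, t). s \<in> S \<and> t \<in> T \<and> t < s}"

lemma cl_sign_invs: "cl_sign S T = (-1) ^ card (invs S T)"
  by (simp add: cl_sign_def invs_def)

lemma finite_invs: "finite S \<Longrightarrow> finite T \<Longrightarrow> finite (invs S T)"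
  by (rule finite_subset[of _ "S \<times> T"]) (auto simp: invs_def)

lemma sign_sq: "cl_sign S T * cl_sign S T = 1"
  by (simp add: cl_sign_def flip: power_add) 

lemma sign_un_left:
  assumes "finite A" "finite B" "finite C" "A \<inter> B = {}"
  shows "cl_sign (A \<union> B) C = cl_sign A C * cl_sign B C"
proof -
  have "invs (A \<union> B) C = invs A C \<union> invs B C" by (auto simp: invs_def)
  moreover have "invs A C \<inter> invs B C = {}" using assms(4) by (auto simp: invs_def)
  ultimately have "card (invs (A \<union> B) C) = card (invs A C) + card (invs B C)"
    using assms by (simp add: card_Un_disjoint finite_invs)
  thus ?thesis by (simp add: cl_sign_invs power_add)
qed

lemma sign_un_right:
  assumes "finite A" "finite B" "finite C" "B \<inter> C = {}"
  shows "cl_sign A (B \<union> C) = cl_sign A B * cl_sign A C"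
proof -
  have "invs A (B \<union> C) = invs A B \<union> invs A C" by (auto simp: invs_def)
  moreover have "invs A B \<inter> invs A C = {}" using assms(4) by (auto simp: invs_def)
  ultimately have "card (invs A (B \<union> C)) = card (invs A B) + card (invs A C)"
    using assms by (simp add: card_Un_disjoint finite_invs)
  thus ?thesis by (simp add: cl_sign_invs power_add)
qed

lemma sign_sd_left:
  assumes "finite A" "finite B" "finite C"
  shows "cl_sign (sd A B) C = cl_sign A C * cl_sign B C"
proof -
  have a: "A = (A - B) \<union> (A \<inter> B)" and b: "B = (B - A) \<union> (A \<inter> B)" by auto
  have "cl_sign A C = cl_sign (A - B) C * cl_sign (A \<inter> B) C"
    using sign_un_left[of "A - B" "A \<inter> B" C] assms a by auto
  moreover have "cl_sign B C = cl_sign (B - A) C * cl_sign (A \<inter> B) C"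
    using sign_un_left[of "B - A" "A \<inter> B" C] assms b by auto
  moreover have "cl_sign (sd A B) C = cl_sign (A - B) C * cl_sign (B - A) C"
    unfolding sd_def using sign_un_left[of "A - B" "B - A" C] assms by auto
  ultimately show ?thesis using sign_sq[of "A \<inter> B" C]
    by (simp add: algebra_simps)
qed

lemma sign_sd_right:
  assumes "finite A" "finite B" "finite C"
  shows "cl_sign A (sd B C) = cl_sign A B * cl_sign A C"
proof -
  have a: "B = (B - C) \<union> (B \<inter> C)" and b: "C = (C - B) \<union> (B \<inter> C)" by auto
  have "cl_sign A B = cl_sign A (B - C) * cl_sign A (B \<inter> C)"
    using sign_un_right[of A "B - C" "B \<inter> C"] assms a by auto
  moreover have "cl_sign A C = cl_sign A (C - B) * cl_sign A (B \<inter> C)"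
    using sign_un_right[of A "C - B" "B \<inter> C"] assms b by auto
  moreover have "cl_sign A (sd B C) = cl_sign A (B - C) * cl_sign A (C - B)"
    unfolding sd_def using sign_un_right[of A "B - C" "C - B"] assms by auto
  ultimately show ?thesis using sign_sq[of A "B \<inter> C"]
    by (simp add: algebra_simps)
qed

lemma cocycle:
  assumes "finite A" "finite B" "finite C"
  shows "cl_sign A B * cl_sign (sd A B) C = cl_sign A (sd B C) * cl_sign B C"
  using assms by (simp add: sign_sd_left sign_sd_right algebra_simps)

lemma sd_sub: "S \<subseteq> {..n} \<Longrightarrow> T \<subseteq> {..n} \<Longrightarrow> sd S T \<subseteq> {..n}"
  by (auto simp: sd_def)

lemma sd_invol[simp]: "sd S (sd S T) = T" by (auto simp: sd_def)
lemma sd_comm: "sd S T = sd T S" by (auto simp: sd_def)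
lemma sd_empty[simp]: "sd S {} = S" "sd {} S = S" by (auto simp: sd_def)
lemma sd_self[simp]: "sd S S = {}" by (auto simp: sd_def)

lemma sd_eq_iff: "(sd S T = U) = (T = sd S U)" by (auto simp: sd_def)

lemma mult_eq:
  assumes "U \<subseteq> {..n}"
  shows "cl_mult n a b U = (\<Sum>S\<in>Pow {..n}. cl_sign S (sd S U) * a S * b (sd S U))"
  unfolding cl_mult_def
proof (rule sum.cong[OF refl])
  fix S assume S: "S \<in> Pow {..n}"
  have "(\<Sum>T\<in>Pow {..n}. if (S - T) \<union> (T - S) = U then cl_sign S T * a S * b T else 0)
     = (\<Sum>T\<in>Pow {..n}. if T = sd S U then cl_sign S T * a S * b T else 0)"
    by (rule sum.cong[OF refl]) (metis sd_def sd_eq_iff)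
  also have "\<dots> = cl_sign S (sd S U) * a S * b (sd S U)"
    using sd_sub[of S n U] S assms by (simp add: sum.delta')
  finally show "(\<Sum>T\<in>Pow {..n}. if (S - T) \<union> (T - S) = U then cl_sign S T * a S * b T else 0)
     = cl_sign S (sd S U) * a S * b (sd S U)" .
qed

lemma mult_out:
  assumes "\<not> U \<subseteq> {..n}"
  shows "cl_mult n a b U = 0"
  unfolding cl_mult_def
  by (rule sum.neutral, intro ballI, rule sum.neutral) (use assms in auto)

lemma mult_in_Cl: "cl_mult n a b \<in> Cl n"
  by (simp add: Cl_def mult_out)

lemma mult_assoc:
  "cl_mult n a (cl_mult n b c) = cl_mult n (cl_mult n a b) c"
proof
  fix U
  show "cl_mult n a (cl_mult n b c) U = cl_mult n (cl_mult n a b) c U"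
  proof (cases "U \<subseteq> {..n}")
    case False thus ?thesis by (simp add: mult_out)
  next
    case U: True
    have fin: "\<And>S. S \<in> Pow {..n} \<Longrightarrow> finite S" by (meson PowD finite_atMost finite_subset)
    have "cl_mult n (cl_mult n a b) c U =
        (\<Sum>R\<in>Pow {..n}. cl_sign R (sd R U) * (\<Sum>S\<in>Pow {..n}. cl_sign S (sd S R) * a S * b (sd S R)) * c (sd R U))"
      by (simp add: mult_eq U)
    also have "\<dots> = (\<Sum>R\<in>Pow {..n}. \<Sum>S\<in>Pow {..n}. cl_sign R (sd R U) * cl_sign S (sd S R) * a S * b (sd S R) * c (sd R U))"
      by (simp add: sum_distrib_left sum_distrib_right mult.assoc)
    also have "\<dots> = (\<Sum>S\<in>Pow {..n}. \<Sum>R\<in>Pow {..n}. cl_sign R (sd R U) * cl_sign S (sd S R) * a S * b (sd S R) * c (sd R U))"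
      by (rule sum.swap)
    also have "\<dots> = (\<Sum>S\<in>Pow {..n}. \<Sum>T\<in>Pow {..n}. cl_sign (sd S T) (sd (sd S T) U) * cl_sign S T * a S * b T * c (sd (sd S T) U))"
    proof (rule sum.cong[OF refl])
      fix S assume S: "S \<in> Pow {..n}"
      show "(\<Sum>R\<in>Pow {..n}. cl_sign R (sd R U) * cl_sign S (sd S R) * a S * b (sd S R) * c (sd R U)) =
            (\<Sum>T\<in>Pow {..n}. cl_sign (sd S T) (sd (sd S T) U) * cl_sign S T * a S * b T * c (sd (sd S T) U))"
        by (rule sum.reindex_bij_witness[of _ "sd S" "sd S"]) (use S sd_sub[of S n] in auto)
    qed
    also have "\<dots> = (\<Sum>S\<in>Pow {..n}. \<Sum>T\<in>Pow {..n}. cl_sign S (sd S U) * a S * (cl_sign T (sd T (sd S U)) * b T * c (sd T (sd S U))))"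
    proof (intro sum.cong[OF refl])
      fix S T assume S: "S \<in> Pow {..n}" and T: "T \<in> Pow {..n}"
      define C where "C = sd T (sd S U)"
      have e1: "sd (sd S T) U = C" by (auto simp: C_def sd_def)
      have e2: "sd S U = sd T C" by (auto simp: C_def sd_def)
      have "C \<subseteq> {..n}" using U S T by (auto simp: C_def sd_def)
      hence fC: "finite C" using finite_subset by blast
      have "cl_sign (sd S T) C * cl_sign S T = cl_sign S (sd T C) * cl_sign T C"
        using cocycle[of S T C] fin[OF S] fin[OF T] fC by (simp add: algebra_simps)
      thus "cl_sign (sd S T) (sd (sd S T) U) * cl_sign S T * a S * b T * c (sd (sd S T) U) =
            cl_sign S (sd S U) * a S * (cl_sign T (sd T (sd S U)) * b T * c (sd T (sd S U)))"
        unfolding e1 e2 C_def[symmetric] by (simp add: algebra_simps)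
    qed
    also have "\<dots> = cl_mult n a (cl_mult n b c) U"
    proof -
      have "\<And>S. S \<in> Pow {..n} \<Longrightarrow> sd S U \<subseteq> {..n}" using sd_sub[of _ n U] U by auto
      thus ?thesis using U by (simp add: mult_eq sum_distrib_left)
    qed
    finally show ?thesis by simp
  qed
qed


definition ip :: "nat \<Rightarrow> cl \<Rightarrow> cl \<Rightarrow> real" where
  "ip n a b = (\<Sum>S\<in>Pow {..n}. a S * b S)"

definition xe :: "nat \<Rightarrow> (nat \<Rightarrow> real) \<Rightarrow> cl" where
  "xe n x = (\<lambda>S. \<Sum>i\<le>n. x i * cl_gen i S)"

lemma fin_pow: "S \<in> Pow {..(n::nat)} \<Longrightarrow> finite S"
  by (rule finite_subset[of _ "{..n}"]) auto

lemma sum_delta_mid: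
  assumes "finite A" "a \<in> A"
  shows "(\<Sum>S\<in>A. f S * (if S = a then 1 else 0) * g S) = f a * (g a::real)"
proof -
  have "(\<Sum>S\<in>A. f S * (if S = a then 1 else 0) * g S) = (\<Sum>S\<in>A. if S = a then f S * g S else 0)"
    by (rule sum.cong) auto
  thus ?thesis using assms by simp
qed

lemma sdU: "S \<in> Pow {..n} \<Longrightarrow> U \<subseteq> {..n} \<Longrightarrow> sd S U \<subseteq> {..n}"
  using sd_sub by auto

lemma mult_sum_left:
  assumes "finite K"
  shows "cl_mult n (\<lambda>S. \<Sum>k\<in>K. f k S) b U = (\<Sum>k\<in>K. cl_mult n (f k) b U)"
proof (cases "U \<subseteq> {..n}")
  case True
  thus ?thesis by (simp add: mult_eq sum_distrib_left sum_distrib_right mult.assoc sum.swap[of _ K])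
qed (simp add: mult_out)

lemma mult_sum_right:
  assumes "finite K"
  shows "cl_mult n a (\<lambda>S. \<Sum>k\<in>K. f k S) U = (\<Sum>k\<in>K. cl_mult n a (f k) U)"
proof (cases "U \<subseteq> {..n}")
  case True
  thus ?thesis by (simp add: mult_eq sum_distrib_left sum_distrib_right mult.assoc sum.swap[of _ K])
qed (simp add: mult_out)

lemma mult_add_left:
  "cl_mult n (\<lambda>S. a S + a' S) b U = cl_mult n a b U + cl_mult n a' b U"
proof (cases "U \<subseteq> {..n}")
  case True
  thus ?thesis by (simp add: mult_eq algebra_simps sum.distrib)
qed (simp add: mult_out)

lemma mult_add_right:
  "cl_mult n a (\<lambda>S. b S + b' S) U = cl_mult n a b U + cl_mult n a b' U"
proof (cases "U \<subseteq> {..n}")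
  case True
  thus ?thesis by (simp add: mult_eq algebra_simps sum.distrib)
qed (simp add: mult_out)

lemma mult_scale_left:
  "cl_mult n (\<lambda>S. r * a S) b U = r * cl_mult n a b U"
proof (cases "U \<subseteq> {..n}")
  case True
  thus ?thesis by (simp add: mult_eq algebra_simps sum_distrib_left)
qed (simp add: mult_out)

lemma mult_scale_right:
  "cl_mult n a (\<lambda>S. r * b S) U = r * cl_mult n a b U"
proof (cases "U \<subseteq> {..n}")
  case True
  thus ?thesis by (simp add: mult_eq algebra_simps sum_distrib_left)
qed (simp add: mult_out)

lemma mult_zero_right: "cl_mult n a (\<lambda>S. 0) U = 0"
  using mult_scale_right[of n a 0 "\<lambda>S. 0" U] by simp

lemma mult_zero_left: "cl_mult n (\<lambda>S. 0) b U = 0"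
  using mult_scale_left[of n 0 "\<lambda>S. 0" b U] by simp

lemma sign_empty_left[simp]: "cl_sign {} T = 1"
  by (simp add: cl_sign_def)

lemma mult_one_left:
  assumes "y \<in> Cl n"
  shows "cl_mult n cl_one y = y"
proof
  fix U show "cl_mult n cl_one y U = y U"
  proof (cases "U \<subseteq> {..n}")
    case True
    thus ?thesis by (simp add: mult_eq cl_one_def sum_delta_mid)
  qed (use assms in \<open>simp add: mult_out Cl_def\<close>)
qed

lemma mult_gen:
  assumes "i \<le> n"
  shows "cl_mult n (cl_gen i) y U = (if U \<subseteq> {..n} then cl_sign {i} (sd {i} U) * y (sd {i} U) else 0)"
proof (cases "U \<subseteq> {..n}")
  case True
  thus ?thesis using assms by (simp add: mult_eq cl_gen_def sum_delta_mid)
qed (simp add: mult_out)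

lemma sign_single: "cl_sign {i} {j} = (if j < i then -1 else 1)"
proof -
  have "invs {i} {j} = (if j < i then {(i,j)} else {})" by (auto simp: invs_def)
  thus ?thesis by (simp add: cl_sign_invs)
qed

lemma sign_single_sd: "cl_sign {i} (sd {i} V) = cl_sign {i} V"
proof -
  have "invs {i} (sd {i} V) = invs {i} V" by (auto simp: invs_def sd_def)
  thus ?thesis by (simp add: cl_sign_invs)
qed

lemma mult_xe_left:
  "cl_mult n (xe n x) y U = (\<Sum>i\<le>n. x i * cl_mult n (cl_gen i) y U)"
  unfolding xe_def by (simp add: mult_sum_left mult_scale_left)

lemma xe_sq:
  "cl_mult n (xe n x) (xe n x) = (\<lambda>U. if U = {} then (\<Sum>i\<le>n. (x i)^2) else 0)"
proof
  fix U
  define g where "g i j = x i * x j * (if sd {i} U = {j} then cl_sign {i} {j} else 0)" for i j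
  show "cl_mult n (xe n x) (xe n x) U = (if U = {} then (\<Sum>i\<le>n. (x i)^2) else 0)"
  proof (cases "U \<subseteq> {..n}")
    case False
    thus ?thesis by (auto simp: mult_out)
  next
    case U: True
    have "cl_mult n (xe n x) (xe n x) U = (\<Sum>i\<le>n. \<Sum>j\<le>n. g i j)"
      unfolding mult_xe_left
    proof (rule sum.cong[OF refl])
      fix i assume i: "i \<in> {..n}"
      have "cl_mult n (cl_gen i) (xe n x) U = cl_sign {i} (sd {i} U) * xe n x (sd {i} U)"
        using i U by (simp add: mult_gen)
      also have "\<dots> = (\<Sum>j\<le>n. cl_sign {i} (sd {i} U) * (x j * (if sd {i} U = {j} then 1 else 0)))"
        by (simp add: xe_def cl_gen_def sum_distrib_left)
      finally have "x i * cl_mult n (cl_gen i) (xe n x) U = x i * (\<Sum>j\<le>n. cl_sign {i} (sd {i} U) * (x j * (if sd {i} U = {j} then 1 else 0)))" by simp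
      also have "\<dots> = (\<Sum>j\<le>n. g i j)"
        unfolding sum_distrib_left
      proof (intro sum.cong[OF refl])
        fix j
        show "x i * (cl_sign {i} (sd {i} U) * (x j * (if sd {i} U = {j} then 1 else 0))) = g i j"
        proof (cases "sd {i} U = {j}")
          case True
          have "g i j = x i * x j * cl_sign {i} {j}" unfolding g_def if_P[OF True] by (rule refl)
          thus ?thesis unfolding if_P[OF True] True by simp
        next
          case False
          have "g i j = 0" unfolding g_def using False by (simp only: if_False mult_zero_right)
          thus ?thesis using False by (simp only: if_False mult_zero_right mult_zero_left)
        qed
      qed
      finally show "x i * cl_mult n (cl_gen i) (xe n x) U = (\<Sum>j\<le>n. g i j)" .
    qed
    also have "\<dots> = (if U = {} then (\<Sum>i\<le>n. (x i)^2) else 0)"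
    proof (cases "U = {}")
      case True
      have "(\<Sum>i\<le>n. \<Sum>j\<le>n. g i j) = (\<Sum>i\<le>n. (x i)^2)"
      proof (rule sum.cong[OF refl])
        fix i assume "i \<in> {..n}"
        have "(\<Sum>j\<le>n. g i j) = (\<Sum>j\<le>n. if j = i then (x i)^2 else 0)"
          by (rule sum.cong[OF refl]) (auto simp: g_def True sign_single power2_eq_square)
        thus "(\<Sum>j\<le>n. g i j) = (x i)^2" using \<open>i \<in> {..n}\<close> by simp
      qed
      thus ?thesis using True by simp
    next
      case False
      have anti: "g j i = - g i j" for i j
      proof (cases "i = j")
        case True
        have "sd {i} U \<noteq> {i}" using False sd_eq_iff[of "{i}" U "{i}"] by auto
        thus ?thesis using True by (simp add: g_def)
      next
        case ne: False
        have "(sd {j} U = {i}) = (sd {i} U = {j})"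
          by (metis sd_eq_iff sd_comm)
        thus ?thesis using ne by (auto simp: g_def sign_single)
      qed
      have "(\<Sum>i\<le>n. \<Sum>j\<le>n. g i j) = (\<Sum>j\<le>n. \<Sum>i\<le>n. g i j)" by (rule sum.swap)
      also have "\<dots> = (\<Sum>j\<le>n. \<Sum>i\<le>n. - g j i)" by (intro sum.cong refl) (rule anti)
      also have "\<dots> = - (\<Sum>j\<le>n. \<Sum>i\<le>n. g j i)" by (simp add: sum_negf)
      finally have "(\<Sum>i\<le>n. \<Sum>j\<le>n. g i j) = 0" by simp
      thus ?thesis using False by simp
    qed
    finally show ?thesis .
  qed
qed

lemma xe_xe:
  assumes "y \<in> Cl n"
  shows "cl_mult n (xe n x) (cl_mult n (xe n x) y) = (\<lambda>U. (\<Sum>i\<le>n. (x i)^2) * y U)"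
proof -
  have "cl_mult n (xe n x) (xe n x) = (\<lambda>S. (\<Sum>i\<le>n. (x i)^2) * cl_one S)"
    by (rule ext) (simp add: xe_sq cl_one_def)
  thus ?thesis
    by (intro ext) (simp add: mult_assoc mult_scale_left mult_one_left[OF assms])
qed


lemma neg1_sq: "(-1::real) ^ k * (-1) ^ k = 1"
  by (simp flip: power_mult_distrib)

lemma neg1_sq2: "((-1::real) ^ k * a) * ((-1) ^ k * b) = a * b"
proof -
  have "((-1::real) ^ k * a) * ((-1) ^ k * b) = ((-1) ^ k * (-1) ^ k) * (a * b)"
    by (simp only: mult_ac)
  thus ?thesis by (simp only: neg1_sq mult_1)
qed

lemma card_sd_parity:
  assumes "finite A" "finite B"
  shows "(-1::real) ^ card (sd A B) = (-1) ^ card A * (-1) ^ card B"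
proof -
  have "card A = card (A - B) + card (A \<inter> B)"
    using card_Int_Diff[OF assms(1), of B] by simp
  moreover have "card B = card (B - A) + card (A \<inter> B)"
    using card_Int_Diff[OF assms(2), of A] by (simp add: Int_commute)
  moreover have "card (sd A B) = card (A - B) + card (B - A)"
    unfolding sd_def using assms by (subst card_Un_disjoint) auto
  ultimately have "(-1::real) ^ card A * (-1) ^ card B = (-1) ^ card (A - B) * (-1) ^ card (B - A) * ((-1) ^ card (A \<inter> B) * (-1) ^ card (A \<inter> B))"
    and "(-1::real) ^ card (sd A B) = (-1) ^ card (A - B) * (-1) ^ card (B - A)"
    by (simp_all add: power_add mult_ac)
  thus ?thesis by (simp add: neg1_sq)
qed

lemma tau_mult: "cl_tau (cl_mult n a b) = cl_mult n (cl_tau a) (cl_tau b)"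
proof
  fix U show "cl_tau (cl_mult n a b) U = cl_mult n (cl_tau a) (cl_tau b) U"
  proof (cases "U \<subseteq> {..n}")
    case U: True
    have fU: "finite U" using U finite_subset by blast
    have "cl_tau (cl_mult n a b) U = (\<Sum>S\<in>Pow {..n}. (-1) ^ card U * (cl_sign S (sd S U) * a S * b (sd S U)))"
      by (simp add: cl_tau_def mult_eq U sum_distrib_left)
    also have "\<dots> = cl_mult n (cl_tau a) (cl_tau b) U"
      unfolding mult_eq[OF U] cl_tau_def
    proof (rule sum.cong[OF refl])
      fix S assume S: "S \<in> Pow {..n}"
      have "(-1::real) ^ card (sd S U) = (-1) ^ card S * (-1) ^ card U"
        using card_sd_parity[OF fin_pow[OF S] fU] .
      hence "cl_sign S (sd S U) * ((-1) ^ card S * a S) * ((-1) ^ card (sd S U) * b (sd S U))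
         = ((-1) ^ card S * (-1) ^ card S) * ((-1) ^ card U * (cl_sign S (sd S U) * a S * b (sd S U)))"
        by (simp only: mult_ac)
      thus "(-1) ^ card U * (cl_sign S (sd S U) * a S * b (sd S U)) =
         cl_sign S (sd S U) * ((-1) ^ card S * a S) * ((-1) ^ card (sd S U) * b (sd S U))"
        by (simp only: neg1_sq mult_1)
    qed
    finally show ?thesis .
  qed (simp add: mult_out cl_tau_def)
qed

lemma tau_tau[simp]: "cl_tau (cl_tau a) = a"
  by (rule ext) (simp add: cl_tau_def mult.assoc[symmetric] neg1_sq)

lemma tau_Cl: "a \<in> Cl n \<Longrightarrow> cl_tau a \<in> Cl n"
  by (simp add: Cl_def cl_tau_def)

lemma tau_xe: "cl_tau (xe n x) = (\<lambda>S. - xe n x S)"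
proof
  fix S
  show "cl_tau (xe n x) S = - xe n x S"
    unfolding cl_tau_def xe_def sum_distrib_left sum_negf[symmetric]
    by (rule sum.cong[OF refl]) (auto simp: cl_gen_def)
qed

lemma tau_xe_mult: "cl_tau (cl_mult n (xe n x) y) = (\<lambda>U. - cl_mult n (xe n x) (cl_tau y) U)"
  by (rule ext) (simp add: tau_mult tau_xe mult_scale_left[of n "-1", simplified])

lemma ip_sym: "ip n a b = ip n b a"
  by (simp add: ip_def mult.commute)

lemma ip_tau: "ip n (cl_tau a) (cl_tau b) = ip n a b"
  by (simp add: ip_def cl_tau_def neg1_sq2)

lemma ip_sum_right: "finite K \<Longrightarrow> ip n a (\<lambda>S. \<Sum>k\<in>K. f k S) = (\<Sum>k\<in>K. ip n a (f k))"
  by (simp add: ip_def sum_distrib_left sum.swap[of _ K])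

lemma ip_sum_left: "finite K \<Longrightarrow> ip n (\<lambda>S. \<Sum>k\<in>K. f k S) b = (\<Sum>k\<in>K. ip n (f k) b)"
  by (simp add: ip_def sum_distrib_right sum.swap[of _ K])

lemma ip_add_right: "ip n a (\<lambda>S. b S + c S) = ip n a b + ip n a c"
  by (simp add: ip_def algebra_simps sum.distrib)

lemma ip_add_left: "ip n (\<lambda>S. b S + c S) a = ip n b a + ip n c a"
  by (simp add: ip_def algebra_simps sum.distrib)

lemma ip_scale_right: "ip n a (\<lambda>S. r * b S) = r * ip n a b"
  by (simp add: ip_def algebra_simps sum_distrib_left)

lemma ip_scale_left: "ip n (\<lambda>S. r * b S) a = r * ip n b a"
  by (simp add: ip_def algebra_simps sum_distrib_left)

lemma ip_gen_adj:
  assumes "i \<le> n"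
  shows "ip n (cl_mult n (cl_gen i) a) b = ip n a (cl_mult n (cl_gen i) b)"
proof -
  have "ip n (cl_mult n (cl_gen i) a) b = (\<Sum>U\<in>Pow {..n}. cl_sign {i} (sd {i} U) * a (sd {i} U) * b U)"
    unfolding ip_def by (rule sum.cong[OF refl]) (simp add: mult_gen assms)
  also have "\<dots> = (\<Sum>V\<in>Pow {..n}. cl_sign {i} V * a V * b (sd {i} V))"
    by (rule sum.reindex_bij_witness[of _ "sd {i}" "sd {i}"])
       (use assms sd_sub[of "{i}" n] in \<open>auto simp: sign_single_sd\<close>)
  also have "\<dots> = ip n a (cl_mult n (cl_gen i) b)"
    unfolding ip_def by (rule sum.cong[OF refl]) (simp add: mult_gen assms sign_single_sd)
  finally show ?thesis .
qed

lemma ip_xe_adj: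
  "ip n (cl_mult n (xe n x) a) b = ip n a (cl_mult n (xe n x) b)"
proof -
  have "ip n (cl_mult n (xe n x) a) b = (\<Sum>i\<le>n. x i * ip n (cl_mult n (cl_gen i) a) b)"
    unfolding mult_xe_left by (simp add: ip_sum_left ip_scale_left)
  also have "\<dots> = (\<Sum>i\<le>n. x i * ip n a (cl_mult n (cl_gen i) b))"
    by (simp add: ip_gen_adj)
  also have "\<dots> = ip n a (cl_mult n (xe n x) b)"
    unfolding mult_xe_left by (simp add: ip_sum_right ip_scale_right)
  finally show ?thesis .
qed

lemma card_invs_self:
  assumes "finite S"
  shows "card (invs S S) = card S * (card S - 1) div 2"
proof -
  have inj: "inj_on (\<lambda>(s,t). {s,t}) (invs S S)"
  proof (rule inj_onI)
    fix p q assume p: "p \<in> invs S S" and q: "q \<in> invs S S" and e: "(\<lambda>(s,t). {s,t}) p = (\<lambda>(s,t). {s,t}) q"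
    obtain a b where ab: "p = (a,b)" by (cases p)
    obtain c d where cd: "q = (c,d)" by (cases q)
    have "b < a" "d < c" using p q ab cd by (simp_all add: invs_def)
    moreover have "{a,b} = {c,d}" using e ab cd by simp
    ultimately show "p = q" using ab cd by (metis doubleton_eq_iff not_less_iff_gr_or_eq)
  qed
  have img: "(\<lambda>(s,t). {s,t}) ` invs S S = {B. B \<subseteq> S \<and> card B = 2}"
  proof
    show "(\<lambda>(s,t). {s,t}) ` invs S S \<subseteq> {B. B \<subseteq> S \<and> card B = 2}"
    proof
      fix B assume "B \<in> (\<lambda>(s,t). {s,t}) ` invs S S"
      then obtain a b where "(a,b) \<in> invs S S" "B = {a,b}" by auto
      thus "B \<in> {B. B \<subseteq> S \<and> card B = 2}" by (simp add: invs_def)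
    qed
  next
    show "{B. B \<subseteq> S \<and> card B = 2} \<subseteq> (\<lambda>(s,t). {s,t}) ` invs S S"
    proof
      fix B assume "B \<in> {B. B \<subseteq> S \<and> card B = 2}"
      hence "B \<subseteq> S" "card B = 2" by simp_all
      then obtain a b where B: "B = {a,b}" "a \<noteq> b" "a \<in> S" "b \<in> S"
        unfolding card_2_iff by blast
      show "B \<in> (\<lambda>(s,t). {s,t}) ` invs S S"
      proof (cases "b < a")
        case True
        hence "(a,b) \<in> invs S S" using B by (simp add: invs_def)
        moreover have "B = (\<lambda>(s,t). {s,t}) (a,b)" using B by simp
        ultimately show ?thesis by (rule rev_image_eqI)
      next
        case False
        hence "a < b" using B by simp
        hence "(b,a) \<in> invs S S" using B by (simp add: invs_def)
        moreover have "B = (\<lambda>(s,t). {s,t}) (b,a)" using B by (simp add: insert_commute)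
        ultimately show ?thesis by (rule rev_image_eqI)
      qed
    qed
  qed
  have "card (invs S S) = card {B. B \<subseteq> S \<and> card B = 2}"
    using card_image[OF inj] img by simp
  also have "\<dots> = card S choose 2" using assms by (simp add: n_subsets)
  finally show ?thesis by (simp add: choose_two)
qed

lemma rev_sign: "finite S \<Longrightarrow> (-1::real) ^ (card S * (card S - 1) div 2) * cl_sign S S = 1"
  by (simp add: cl_sign_invs card_invs_self flip: power_add)

lemma cl_tr_eq: "cl_tr n a = 2 ^ Suc n * a {}"
proof -
  have "cl_tr n a = (\<Sum>S\<in>Pow {..n}. a {})"
    unfolding cl_tr_def
  proof (rule sum.cong[OF refl])
    fix S assume S: "S \<in> Pow {..n}"
    have "cl_mult n a (cl_basis S) S = (\<Sum>R\<in>Pow {..n}. cl_sign R (sd R S) * a R * (if sd R S = S then 1 else 0))"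
      using S by (simp add: mult_eq cl_basis_def)
    also have "\<dots> = (\<Sum>R\<in>Pow {..n}. if R = {} then a R else 0)"
    proof (rule sum.cong[OF refl])
      fix R
      have "(sd R S = S) = (R = {})" by (auto simp: sd_def)
      thus "cl_sign R (sd R S) * a R * (if sd R S = S then 1 else 0) = (if R = {} then a R else 0)"
        by simp
    qed
    also have "\<dots> = a {}" by simp
    finally show "cl_mult n a (cl_basis S) S = a {}" .
  qed
  also have "\<dots> = 2 ^ Suc n * a {}" by (simp add: card_Pow)
  finally show ?thesis .
qed

lemma beta_ip: "cl_beta n y z = 2 ^ Suc n * ip n y z"
proof -
  have "cl_mult n (cl_rev y) z {} = ip n y z"
    unfolding mult_eq[OF empty_subsetI] ip_def
  proof (rule sum.cong[OF refl])
    fix S assume S: "S \<in> Pow {..n}"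
    show "cl_sign S (sd S {}) * cl_rev y S * z (sd S {}) = y S * z S"
      using rev_sign[OF fin_pow[OF S]] by (simp add: cl_rev_def algebra_simps)
  qed
  thus ?thesis by (simp add: cl_beta_def cl_tr_eq)
qed

lemma An_I: "p \<in> polyfun n \<Longrightarrow> (\<lambda>x. if x \<in> sph n then p x else 0) \<in> An n"
  unfolding An_def by blast

lemma An_off: "f \<in> An n \<Longrightarrow> x \<notin> sph n \<Longrightarrow> f x = 0"
  by (auto simp: An_def)

lemma An_add: "f \<in> An n \<Longrightarrow> g \<in> An n \<Longrightarrow> (\<lambda>x. f x + g x) \<in> An n"
proof -
  assume "f \<in> An n" "g \<in> An n"
  then obtain p q where p: "p \<in> polyfun n" "f = (\<lambda>x. if x \<in> sph n then p x else 0)"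
    and q: "q \<in> polyfun n" "g = (\<lambda>x. if x \<in> sph n then q x else 0)" by (auto simp: An_def)
  have pf: "(\<lambda>x. p x + q x) \<in> polyfun n" by (rule pf_add[OF p(1) q(1)])
  have eq: "(\<lambda>x. f x + g x) = (\<lambda>x. if x \<in> sph n then p x + q x else 0)" using p q by auto
  show ?thesis unfolding eq by (rule An_I[OF pf])
qed

lemma An_mult: "f \<in> An n \<Longrightarrow> g \<in> An n \<Longrightarrow> (\<lambda>x. f x * g x) \<in> An n"
proof -
  assume "f \<in> An n" "g \<in> An n"
  then obtain p q where p: "p \<in> polyfun n" "f = (\<lambda>x. if x \<in> sph n then p x else 0)"
    and q: "q \<in> polyfun n" "g = (\<lambda>x. if x \<in> sph n then q x else 0)" by (auto simp: An_def)
  have pf: "(\<lambda>x. p x * q x) \<in> polyfun n" by (rule pf_mult[OF p(1) q(1)])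
  have eq: "(\<lambda>x. f x * g x) = (\<lambda>x. if x \<in> sph n then p x * q x else 0)" using p q by auto
  show ?thesis unfolding eq by (rule An_I[OF pf])
qed

lemma An_cmult: "f \<in> An n \<Longrightarrow> (\<lambda>x. c * f x) \<in> An n"
proof -
  assume "f \<in> An n"
  then obtain p where p: "p \<in> polyfun n" "f = (\<lambda>x. if x \<in> sph n then p x else 0)"
    by (auto simp: An_def)
  have pf: "(\<lambda>x. c * p x) \<in> polyfun n" by (rule pf_mult[OF pf_const p(1)])
  have eq: "(\<lambda>x. c * f x) = (\<lambda>x. if x \<in> sph n then c * p x else 0)" using p by auto
  show ?thesis unfolding eq by (rule An_I[OF pf])
qed

lemma An_vmult: "j \<le> n \<Longrightarrow> f \<in> An n \<Longrightarrow> (\<lambda>x. x j * f x) \<in> An n"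
proof -
  assume j: "j \<le> n" and "f \<in> An n"
  then obtain p where p: "p \<in> polyfun n" "f = (\<lambda>x. if x \<in> sph n then p x else 0)"
    by (auto simp: An_def)
  have pf: "(\<lambda>x. x j * p x) \<in> polyfun n" by (rule pf_mult[OF pf_var[OF j] p(1)])
  have eq: "(\<lambda>x. x j * f x) = (\<lambda>x. if x \<in> sph n then x j * p x else 0)" using p by auto
  show ?thesis unfolding eq by (rule An_I[OF pf])
qed

lemma An_zero: "(\<lambda>x. 0) \<in> An n"
proof -
  have pf: "(\<lambda>x. 0::real) \<in> polyfun n" by (rule pf_const)
  have eq: "(\<lambda>x. 0::real) = (\<lambda>x. if x \<in> sph n then 0 else 0)" by auto
  show ?thesis unfolding eq by (rule An_I[OF pf])
qed

lemma An_sum: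
  assumes "finite K" "\<And>k. k \<in> K \<Longrightarrow> f k \<in> An n"
  shows "(\<lambda>x. \<Sum>k\<in>K. f k x) \<in> An n"
  using assms
proof (induction K rule: finite_induct)
  case empty thus ?case using An_zero by simp
next
  case (insert k K)
  have "(\<lambda>x. f k x + (\<Sum>k\<in>K. f k x)) \<in> An n"
    using insert by (intro An_add) auto
  thus ?case using insert by simp
qed

lemma sum_lessThan_add: "(\<Sum>k<m + (m'::nat). f k) = (\<Sum>k<m. f k) + (\<Sum>k<m'. f (m + k))"
  by (induction m') (simp_all add: algebra_simps)

lemma tensA_I:
  "(\<And>k. k < (m::nat) \<Longrightarrow> a k \<in> An n \<and> v k \<in> E) \<Longrightarrow> (\<lambda>x S. \<Sum>k<m. a k x * v k S) \<in> tensA n E"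
  unfolding tensA_def mem_Collect_eq by (rule exI[of _ m], rule exI[of _ a], rule exI[of _ v]) auto

lemma tensA_E:
  assumes "u \<in> tensA n E"
  obtains m a v where "\<And>k. k < (m::nat) \<Longrightarrow> a k \<in> An n" "\<And>k. k < m \<Longrightarrow> v k \<in> E"
    "u = (\<lambda>x S. \<Sum>k<m. a k x * v k S)"
proof -
  from assms have "\<exists>m a v. (\<forall>k<(m::nat). a k \<in> An n \<and> v k \<in> E) \<and> u = (\<lambda>x S. \<Sum>k<m. a k x * v k S)"
    unfolding tensA_def by simp
  then obtain m a v where "\<forall>k<(m::nat). a k \<in> An n \<and> v k \<in> E" "u = (\<lambda>x S. \<Sum>k<m. a k x * v k S)"
    by blast
  thus thesis by (intro that[of m a v]) auto
qed

lemma tensA_ex: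
  assumes "u \<in> tensA n E"
  shows "\<exists>m a v. (\<forall>k<(m::nat). a k \<in> An n \<and> v k \<in> E) \<and> u = (\<lambda>x S. \<Sum>k<m. a k x * v k S)"
  using assms unfolding tensA_def by simp

lemma tensA_zero: "(\<lambda>x S. 0) \<in> tensA n E"
  using tensA_I[of 0 _ n _ E] by simp

lemma tensA_elem: "a \<in> An n \<Longrightarrow> v \<in> E \<Longrightarrow> (\<lambda>x S. a x * v S) \<in> tensA n E"
  using tensA_I[of 1 "\<lambda>_. a" n "\<lambda>_. v" E] by simp

lemma tensA_add:
  assumes "u \<in> tensA n E" "u' \<in> tensA n E"
  shows "(\<lambda>x S. u x S + u' x S) \<in> tensA n E"
proof -
  obtain m a v where m0: "\<forall>k<(m::nat). a k \<in> An n \<and> v k \<in> E"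
    and m3: "u = (\<lambda>x S. \<Sum>k<m. a k x * v k S)" using tensA_ex[OF assms(1)] by blast
  obtain m' a' v' where m0': "\<forall>k<(m'::nat). a' k \<in> An n \<and> v' k \<in> E"
    and m3': "u' = (\<lambda>x S. \<Sum>k<m'. a' k x * v' k S)" using tensA_ex[OF assms(2)] by blast
  define A where "A k = (if k < m then a k else a' (k - m))" for k
  define V where "V k = (if k < m then v k else v' (k - m))" for k
  have "(\<lambda>x S. \<Sum>k<m + m'. A k x * V k S) \<in> tensA n E"
  proof (rule tensA_I)
    fix k assume "k < m + m'"
    thus "A k \<in> An n \<and> V k \<in> E" using m0 m0' by (cases "k < m") (simp_all add: A_def V_def)
  qed
  moreover have "(\<lambda>x S. \<Sum>k<m + m'. A k x * V k S) = (\<lambda>x S. u x S + u' x S)"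
  proof (intro ext)
    fix x S
    have "(\<Sum>k<m + m'. A k x * V k S) = (\<Sum>k<m. A k x * V k S) + (\<Sum>k<m'. A (m + k) x * V (m + k) S)"
      by (rule sum_lessThan_add)
    moreover have "(\<Sum>k<m. A k x * V k S) = u x S"
      unfolding m3 by (rule sum.cong) (simp_all add: A_def V_def)
    moreover have "(\<Sum>k<m'. A (m + k) x * V (m + k) S) = u' x S"
      unfolding m3' by (simp add: A_def V_def)
    ultimately show "(\<Sum>k<m + m'. A k x * V k S) = u x S + u' x S" by simp
  qed
  ultimately show ?thesis by simp
qed


lemma tensA_sum:
  assumes "finite K" "\<And>k. k \<in> K \<Longrightarrow> f k \<in> tensA n E"
  shows "(\<lambda>x S. \<Sum>k\<in>K. f k x S) \<in> tensA n E"
  using assms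
proof (induction K rule: finite_induct)
  case empty thus ?case using tensA_zero by simp
next
  case (insert k K)
  have "(\<lambda>x S. f k x S + (\<Sum>k\<in>K. f k x S)) \<in> tensA n E"
    using insert by (intro tensA_add) auto
  thus ?case using insert by simp
qed

lemma tensA_scale:
  assumes "g \<in> An n" "u \<in> tensA n E"
  shows "(\<lambda>x S. g x * u x S) \<in> tensA n E"
proof -
  obtain m a v where m0: "\<forall>k<(m::nat). a k \<in> An n \<and> v k \<in> E"
    and m3: "u = (\<lambda>x S. \<Sum>k<m. a k x * v k S)" using tensA_ex[OF assms(2)] by blast
  have "(\<lambda>x S. \<Sum>k<m. (\<lambda>x. g x * a k x) x * v k S) \<in> tensA n E"
    by (rule tensA_I) (use m0 assms(1) An_mult in auto)
  thus ?thesis unfolding m3 by (simp add: sum_distrib_left mult.assoc)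
qed

lemma tensA_cscale:
  assumes "u \<in> tensA n E"
  shows "(\<lambda>x S. c * u x S) \<in> tensA n E"
proof -
  obtain m a v where m0: "\<forall>k<(m::nat). a k \<in> An n \<and> v k \<in> E"
    and m3: "u = (\<lambda>x S. \<Sum>k<m. a k x * v k S)" using tensA_ex[OF assms] by blast
  have "(\<lambda>x S. \<Sum>k<m. (\<lambda>x. c * a k x) x * v k S) \<in> tensA n E"
    by (rule tensA_I) (use m0 An_cmult in auto)
  thus ?thesis unfolding m3 by (simp add: sum_distrib_left mult.assoc)
qed

lemma tensA_diff:
  assumes "u \<in> tensA n E" "u' \<in> tensA n E"
  shows "(\<lambda>x S. u x S - u' x S) \<in> tensA n E"
  using tensA_add[OF assms(1) tensA_cscale[OF assms(2), of "-1"]] by simp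

lemma tensA_off:
  assumes "u \<in> tensA n E" "x \<notin> sph n"
  shows "u x = (\<lambda>S. 0)"
proof -
  obtain m a v where m0: "\<forall>k<(m::nat). a k \<in> An n \<and> v k \<in> E"
    and m3: "u = (\<lambda>x S. \<Sum>k<m. a k x * v k S)" using tensA_ex[OF assms(1)] by blast
  show ?thesis unfolding m3 by (intro ext sum.neutral) (use m0 An_off[OF _ assms(2)] in auto)
qed

lemma tensA_map:
  assumes "u \<in> tensA n E" "\<And>v. v \<in> E \<Longrightarrow> L v \<in> E'"
    and lin: "\<And>m (c :: nat \<Rightarrow> real) w. L (\<lambda>S. \<Sum>k<m. c k * w k S) = (\<lambda>S. \<Sum>k<m. c k * L (w k) S)"
  shows "(\<lambda>x. L (u x)) \<in> tensA n E'"
proof -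
  obtain m a v where m0: "\<forall>k<(m::nat). a k \<in> An n \<and> v k \<in> E"
    and m3: "u = (\<lambda>x S. \<Sum>k<m. a k x * v k S)" using tensA_ex[OF assms(1)] by blast
  have "(\<lambda>x S. \<Sum>k<m. a k x * L (v k) S) \<in> tensA n E'"
    by (rule tensA_I) (use m0 assms(2) in auto)
  thus ?thesis unfolding m3 lin .
qed

lemma tau_lin: "cl_tau (\<lambda>S. \<Sum>k<m. c k * w k S) = (\<lambda>S. \<Sum>k<m. c k * cl_tau (w k) S)"
  by (rule ext) (simp add: cl_tau_def sum_distrib_left mult_ac)

lemma ip_tensA:
  assumes "u \<in> tensA n E"
  shows "(\<lambda>x. ip n q (u x)) \<in> An n"
proof -
  obtain m a v where m0: "\<forall>k<(m::nat). a k \<in> An n \<and> v k \<in> E"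
    and m3: "u = (\<lambda>x S. \<Sum>k<m. a k x * v k S)" using tensA_ex[OF assms(1)] by blast
  have "(\<lambda>x. \<Sum>k<m. ip n q (v k) * a k x) \<in> An n"
    by (rule An_sum) (use m0 An_cmult in auto)
  thus ?thesis unfolding m3 by (simp add: ip_sum_right ip_scale_right mult.commute)
qed

lemma LI_iff: "y \<in> left_ideal n p \<longleftrightarrow> (\<exists>c\<in>Cl n. y = cl_mult n c p)"
  by (auto simp: left_ideal_def)

lemma Cl_zero: "(\<lambda>S. 0) \<in> Cl n" by (simp add: Cl_def)
lemma Cl_add: "a \<in> Cl n \<Longrightarrow> b \<in> Cl n \<Longrightarrow> (\<lambda>S. a S + b S) \<in> Cl n" by (simp add: Cl_def)
lemma Cl_scale: "a \<in> Cl n \<Longrightarrow> (\<lambda>S. r * a S) \<in> Cl n" by (simp add: Cl_def)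

lemma LI_zero: "(\<lambda>S. 0) \<in> left_ideal n p"
proof -
  have "cl_mult n (\<lambda>S. 0) p = (\<lambda>S. 0)" by (rule ext) (simp add: mult_zero_left)
  thus ?thesis unfolding LI_iff using Cl_zero by metis
qed

lemma LI_add: "y \<in> left_ideal n p \<Longrightarrow> z \<in> left_ideal n p \<Longrightarrow> (\<lambda>S. y S + z S) \<in> left_ideal n p"
proof -
  assume "y \<in> left_ideal n p" "z \<in> left_ideal n p"
  then obtain c d where c: "c \<in> Cl n" "y = cl_mult n c p" and d: "d \<in> Cl n" "z = cl_mult n d p"
    unfolding LI_iff by blast
  have "cl_mult n (\<lambda>S. c S + d S) p = (\<lambda>S. y S + z S)" by (rule ext) (simp add: mult_add_left c d)
  thus ?thesis unfolding LI_iff using Cl_add[OF c(1) d(1)] by metis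
qed

lemma LI_scale: "y \<in> left_ideal n p \<Longrightarrow> (\<lambda>S. r * y S) \<in> left_ideal n p"
proof -
  assume "y \<in> left_ideal n p"
  then obtain c where c: "c \<in> Cl n" "y = cl_mult n c p" unfolding LI_iff by blast
  have "cl_mult n (\<lambda>S. r * c S) p = (\<lambda>S. r * y S)" by (rule ext) (simp add: mult_scale_left c)
  thus ?thesis unfolding LI_iff using Cl_scale[OF c(1)] by metis
qed

lemma LI_sum:
  assumes "finite K" "\<And>k. k \<in> K \<Longrightarrow> f k \<in> left_ideal n p"
  shows "(\<lambda>S. \<Sum>k\<in>K. f k S) \<in> left_ideal n p"
  using assms
proof (induction K rule: finite_induct)
  case empty thus ?case using LI_zero by simp
next
  case (insert k K)
  have "(\<lambda>S. f k S + (\<Sum>k\<in>K. f k S)) \<in> left_ideal n p"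
    using insert by (intro LI_add) auto
  thus ?case using insert by simp
qed

lemma LI_Cl: "y \<in> left_ideal n p \<Longrightarrow> y \<in> Cl n"
  unfolding LI_iff using mult_in_Cl by blast

lemma LI_lmult: "y \<in> left_ideal n p \<Longrightarrow> cl_mult n a y \<in> left_ideal n p"
proof -
  assume "y \<in> left_ideal n p"
  then obtain c where c: "c \<in> Cl n" "y = cl_mult n c p" unfolding LI_iff by blast
  have "cl_mult n a y = cl_mult n (cl_mult n a c) p" by (simp add: c mult_assoc)
  thus ?thesis unfolding LI_iff using mult_in_Cl by blast
qed

lemma LI_tau: "y \<in> left_ideal n p \<Longrightarrow> cl_tau y \<in> left_ideal n (cl_tau p)"
proof -
  assume "y \<in> left_ideal n p"
  then obtain c where c: "c \<in> Cl n" "y = cl_mult n c p" unfolding LI_iff by blast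
  have "cl_tau y = cl_mult n (cl_tau c) (cl_tau p)" by (simp add: c tau_mult)
  thus ?thesis unfolding LI_iff using tau_Cl[OF c(1)] by blast
qed

lemma LI_tau': "y \<in> left_ideal n (cl_tau p) \<Longrightarrow> cl_tau y \<in> left_ideal n p"
  using LI_tau[of y n "cl_tau p"] by simp

lemma tensA_pt:
  assumes "u \<in> tensA n (left_ideal n p)"
  shows "u x \<in> left_ideal n p"
proof -
  obtain m a v where m0: "\<forall>k<(m::nat). a k \<in> An n \<and> v k \<in> left_ideal n p"
    and m3: "u = (\<lambda>x S. \<Sum>k<m. a k x * v k S)" using tensA_ex[OF assms(1)] by blast
  show ?thesis unfolding m3 by (rule LI_sum) (use m0 LI_scale in auto)
qed

lemma tensA_xe:
  assumes "u \<in> tensA n (left_ideal n p)"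
  shows "(\<lambda>x. cl_mult n (xe n x) (u x)) \<in> tensA n (left_ideal n p)"
proof -
  obtain m a v where m0: "\<forall>k<(m::nat). a k \<in> An n \<and> v k \<in> left_ideal n p"
    and m3: "u = (\<lambda>x S. \<Sum>k<m. a k x * v k S)" using tensA_ex[OF assms(1)] by blast
  have "(\<lambda>x U. \<Sum>i\<le>n. (\<lambda>x U. \<Sum>k<m. (x i * a k x) * cl_mult n (cl_gen i) (v k) U) x U)
      \<in> tensA n (left_ideal n p)"
  proof (rule tensA_sum)
    fix i assume i: "i \<in> {..n}"
    have "(\<lambda>x U. x i * a k x * cl_mult n (cl_gen i) (v k) U) \<in> tensA n (left_ideal n p)" if k: "k \<in> {..<m}" for k
      by (rule tensA_elem[where a = "\<lambda>x. x i * a k x" and v = "cl_mult n (cl_gen i) (v k)"])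
         (use i k m0 An_vmult LI_lmult in auto)
    thus "(\<lambda>x U. \<Sum>k<m. (x i * a k x) * cl_mult n (cl_gen i) (v k) U) \<in> tensA n (left_ideal n p)"
      using tensA_sum[OF finite_lessThan, of m "\<lambda>k x U. x i * a k x * cl_mult n (cl_gen i) (v k) U"] by simp
  qed simp
  moreover have "(\<lambda>x. cl_mult n (xe n x) (u x)) =
     (\<lambda>x U. \<Sum>i\<le>n. (\<lambda>x U. \<Sum>k<m. (x i * a k x) * cl_mult n (cl_gen i) (v k) U) x U)"
    unfolding m3 by (intro ext) (simp add: mult_xe_left mult_sum_right mult_scale_right sum_distrib_left mult_ac)
  ultimately show ?thesis by simp
qed


section \<open>Gram-Schmidt\<close>

definition lc :: "nat \<Rightarrow> (nat \<Rightarrow> cl) \<Rightarrow> (nat \<Rightarrow> real) \<Rightarrow> cl" where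
  "lc k f c = (\<lambda>S. \<Sum>j<k. c j * f j S)"

definition inspan :: "nat \<Rightarrow> (nat \<Rightarrow> cl) \<Rightarrow> cl \<Rightarrow> bool" where
  "inspan k f y \<longleftrightarrow> (\<exists>c. y = lc k f c)"

lemma inspan_base: "i < k \<Longrightarrow> inspan k f (f i)"
proof -
  assume i: "i < k"
  have "f i = lc k f (\<lambda>j. if j = i then 1 else 0)"
  proof
    fix S
    have "(\<Sum>j<k. (if j = i then 1 else 0) * f j S) = (\<Sum>j<k. if j = i then f j S else 0)"
      by (rule sum.cong) auto
    thus "f i S = lc k f (\<lambda>j. if j = i then 1 else 0) S" using i by (simp add: lc_def)
  qed
  thus ?thesis unfolding inspan_def by blast
qed

lemma lc_mono:
  assumes "k \<le> k'"
  shows "lc k f c = lc k' f (\<lambda>j. if j < k then c j else 0)"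
proof
  fix S
  have "(\<Sum>j<k'. (if j < k then c j else 0) * f j S) = (\<Sum>j<k. c j * f j S)"
    by (rule sum.mono_neutral_cong_right) (use assms in auto)
  thus "lc k f c S = lc k' f (\<lambda>j. if j < k then c j else 0) S" by (simp add: lc_def)
qed

lemma inspan_mono: "k \<le> k' \<Longrightarrow> inspan k f y \<Longrightarrow> inspan k' f y"
  unfolding inspan_def using lc_mono by blast

lemma lc_cong: "(\<And>j. j < k \<Longrightarrow> f j = g j) \<Longrightarrow> lc k f c = lc k g c"
  unfolding lc_def by (intro ext sum.cong) auto

lemma inspan_cong: "(\<And>j. j < k \<Longrightarrow> f j = g j) \<Longrightarrow> inspan k f y \<Longrightarrow> inspan k g y"
  unfolding inspan_def using lc_cong by metis

lemma inspan_add: "inspan k f y \<Longrightarrow> inspan k f z \<Longrightarrow> inspan k f (\<lambda>S. y S + z S)"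
proof -
  assume "inspan k f y" "inspan k f z"
  then obtain c d where "y = lc k f c" "z = lc k f d" unfolding inspan_def by blast
  hence "(\<lambda>S. y S + z S) = lc k f (\<lambda>j. c j + d j)"
    by (simp add: lc_def algebra_simps sum.distrib)
  thus ?thesis unfolding inspan_def by blast
qed

lemma inspan_scale: "inspan k f y \<Longrightarrow> inspan k f (\<lambda>S. r * y S)"
proof -
  assume "inspan k f y"
  then obtain c where "y = lc k f c" unfolding inspan_def by blast
  hence "(\<lambda>S. r * y S) = lc k f (\<lambda>j. r * c j)"
    by (simp add: lc_def algebra_simps sum_distrib_left)
  thus ?thesis unfolding inspan_def by blast
qed

lemma inspan_zero: "inspan k f (\<lambda>S. 0)"
proof -
  have "(\<lambda>S. 0) = lc k f (\<lambda>j. 0)" by (simp add: lc_def)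
  thus ?thesis unfolding inspan_def by blast
qed

lemma inspan_sum:
  assumes "finite K" "\<And>i. i \<in> K \<Longrightarrow> inspan k f (g i)"
  shows "inspan k f (\<lambda>S. \<Sum>i\<in>K. g i S)"
  using assms
proof (induction K rule: finite_induct)
  case empty thus ?case using inspan_zero by simp
next
  case (insert i K)
  have "inspan k f (\<lambda>S. g i S + (\<Sum>i\<in>K. g i S))"
    using insert by (intro inspan_add) auto
  thus ?case using insert by simp
qed

lemma inspan_lc: "(\<And>i. i < k \<Longrightarrow> inspan m g (f i)) \<Longrightarrow> inspan m g (lc k f c)"
  unfolding lc_def by (rule inspan_sum) (auto intro: inspan_scale)

lemma inspan_trans: "(\<And>i. i < k \<Longrightarrow> inspan m g (f i)) \<Longrightarrow> inspan k f y \<Longrightarrow> inspan m g y"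
  using inspan_lc unfolding inspan_def[of k] by blast

lemma ip_lc: "ip n a (lc k f c) = (\<Sum>j<k. c j * ip n a (f j))"
  unfolding lc_def by (simp add: ip_sum_right ip_scale_right)

lemma LI_lc: "(\<And>j. j < k \<Longrightarrow> f j \<in> left_ideal n p) \<Longrightarrow> lc k f c \<in> left_ideal n p"
  unfolding lc_def by (rule LI_sum) (auto intro: LI_scale)

lemma ip_self_nonneg: "0 \<le> ip n a a"
  unfolding ip_def by (rule sum_nonneg) simp

lemma ip_self_zero:
  assumes "ip n a a = 0" "a \<in> Cl n"
  shows "a = (\<lambda>S. 0)"
proof
  fix S
  show "a S = 0"
  proof (cases "S \<subseteq> {..n}")
    case True
    have "\<forall>T\<in>Pow {..n}. a T * a T = 0"
      using assms(1) unfolding ip_def by (subst sum_nonneg_eq_0_iff[symmetric]) auto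
    thus ?thesis using True by auto
  qed (use assms(2) in \<open>auto simp: Cl_def\<close>)
qed

lemma ip_orth_lc:
  assumes "\<And>i j. i < k \<Longrightarrow> j < k \<Longrightarrow> ip n (q i) (q j) = (if i = j then 1 else 0)" "i < k"
  shows "ip n (q i) (lc k q c) = c i"
proof -
  have "ip n (q i) (lc k q c) = (\<Sum>j<k. if j = i then c j else 0)"
    unfolding ip_lc by (rule sum.cong) (use assms in auto)
  thus ?thesis using assms(2) by simp
qed

lemma GS_step:
  assumes b: "\<And>i. i < N \<Longrightarrow> b i \<in> left_ideal n p"
    and indep: "\<And>c. lc N b c = (\<lambda>S. 0) \<Longrightarrow> \<forall>i<N. c i = 0"
  shows "k \<le> N \<Longrightarrow> \<exists>q. (\<forall>i<k. q i \<in> left_ideal n p) \<and>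
      (\<forall>i<k. \<forall>j<k. ip n (q i) (q j) = (if i = j then 1 else 0)) \<and>
      (\<forall>i<k. inspan k q (b i)) \<and> (\<forall>i<k. inspan k b (q i))"
proof (induction k)
  case 0 show ?case by simp
next
  case (Suc k)
  then obtain q where qE: "\<forall>i<k. q i \<in> left_ideal n p"
    and qon: "\<forall>i<k. \<forall>j<k. ip n (q i) (q j) = (if i = j then 1 else 0)"
    and bq: "\<forall>i<k. inspan k q (b i)" and qb: "\<forall>i<k. inspan k b (q i)" by auto
  have kN: "k < N" using Suc by simp
  define \<alpha> where "\<alpha> j = ip n (q j) (b k)" for j
  define r where "r = (\<lambda>S. b k S + (-1) * lc k q \<alpha> S)"
  have rE: "r \<in> left_ideal n p"
    unfolding r_def by (intro LI_add LI_scale LI_lc b kN) (use qE in auto)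
  have r_orth: "ip n (q i) r = 0" if i: "i < k" for i
  proof -
    have "ip n (q i) r = \<alpha> i + (-1) * ip n (q i) (lc k q \<alpha>)"
      unfolding r_def ip_add_right ip_scale_right \<alpha>_def by simp
    also have "\<dots> = 0" using ip_orth_lc[where k=k and q=q and n=n and i=i and c=\<alpha>] qon i by simp
    finally show ?thesis .
  qed
  have rpos: "ip n r r > 0"
  proof (rule ccontr)
    assume "\<not> ip n r r > 0"
    hence "ip n r r = 0" using ip_self_nonneg[of n r] by simp
    hence r0: "r = (\<lambda>S. 0)" using ip_self_zero LI_Cl[OF rE] by blast
    have "b k = lc k q \<alpha>"
    proof
      fix S have "r S = 0" using r0 by simp
      thus "b k S = lc k q \<alpha> S" unfolding r_def by simp
    qed
    hence "inspan k q (b k)" unfolding inspan_def by blast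
    hence "inspan k b (b k)" by (rule inspan_trans[rotated]) (use qb in auto)
    then obtain c where c: "b k = lc k b c" unfolding inspan_def by blast
    define \<gamma> where "\<gamma> l = (if l < k then c l else if l = k then -1 else 0)" for l
    have "lc N b \<gamma> = (\<lambda>S. 0)"
    proof
      fix S
      have "lc N b \<gamma> S = (\<Sum>l<Suc k. \<gamma> l * b l S)"
        unfolding lc_def by (rule sum.mono_neutral_cong_right) (use kN in \<open>auto simp: \<gamma>_def\<close>)
      also have "\<dots> = (\<Sum>l<k. c l * b l S) - b k S"
        by (simp add: \<gamma>_def)
      also have "(\<Sum>l<k. c l * b l S) = b k S" using c by (simp add: lc_def)
      finally show "lc N b \<gamma> S = 0" by simp
    qed
    hence "\<gamma> k = 0" using indep kN by blast
    thus False by (simp add: \<gamma>_def)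
  qed
  define s where "s = sqrt (ip n r r)"
  have spos: "s > 0" using rpos by (simp add: s_def)
  have ss: "s * s = ip n r r" using rpos by (simp add: s_def)
  define q' where "q' = q(k := (\<lambda>S. (1 / s) * r S))"
  have q'k: "q' k = (\<lambda>S. (1 / s) * r S)" by (simp add: q'_def)
  have q'lt: "q' i = q i" if "i < k" for i using that by (simp add: q'_def)
  have "q' k \<in> left_ideal n p" unfolding q'k by (rule LI_scale[OF rE])
  hence q'E: "\<forall>i<Suc k. q' i \<in> left_ideal n p"
    using qE q'lt by (auto simp: less_Suc_eq)
  have ipkk: "ip n (q' k) (q' k) = 1"
  proof -
    have "ip n (q' k) (q' k) = ip n r r / (s * s)"
      unfolding q'k ip_scale_left ip_scale_right by simp
    thus ?thesis unfolding ss using rpos by simp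
  qed
  have ipik: "ip n (q' i) (q' k) = 0" if "i < k" for i
    unfolding q'k ip_scale_right q'lt[OF that] using r_orth[OF that] by simp
  have ipki: "ip n (q' k) (q' i) = 0" if "i < k" for i
    using ipik[OF that] ip_sym[of n "q' k" "q' i"] by simp
  have q'on: "\<forall>i<Suc k. \<forall>j<Suc k. ip n (q' i) (q' j) = (if i = j then 1 else 0)"
  proof (intro allI impI)
    fix i j assume "i < Suc k" "j < Suc k"
    thus "ip n (q' i) (q' j) = (if i = j then 1 else 0)"
      using qon q'lt ipkk ipik ipki by (auto simp: less_Suc_eq)
  qed
  have bq': "\<forall>i<Suc k. inspan (Suc k) q' (b i)"
  proof (intro allI impI)
    fix i assume "i < Suc k"
    show "inspan (Suc k) q' (b i)"
    proof (cases "i < k")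
      case True
      have qq: "\<And>j. j < k \<Longrightarrow> q j = q' j" using q'lt by simp
      have "inspan k q (b i)" using bq True by blast
      hence "inspan k q' (b i)" by (rule inspan_cong[OF qq, rotated])
      thus ?thesis by (rule inspan_mono[rotated]) simp
    next
      case False
      hence ik: "i = k" using \<open>i < Suc k\<close> by simp
      have "lc k q \<alpha> = lc k q' \<alpha>" by (rule lc_cong) (simp add: q'lt)
      hence "inspan k q' (lc k q \<alpha>)" unfolding inspan_def by blast
      hence "inspan (Suc k) q' (lc k q \<alpha>)" by (rule inspan_mono[rotated]) simp
      moreover have "inspan (Suc k) q' (\<lambda>S. s * q' k S)"
        by (rule inspan_scale, rule inspan_base) simp
      ultimately have "inspan (Suc k) q' (\<lambda>S. lc k q \<alpha> S + s * q' k S)"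
        by (rule inspan_add)
      moreover have "(\<lambda>S. lc k q \<alpha> S + s * q' k S) = b k"
      proof
        fix S
        have "s * q' k S = r S" using spos by (simp add: q'k)
        thus "lc k q \<alpha> S + s * q' k S = b k S" by (simp add: r_def)
      qed
      ultimately show ?thesis using ik by simp
    qed
  qed
  have qb': "\<forall>i<Suc k. inspan (Suc k) b (q' i)"
  proof (intro allI impI)
    fix i assume "i < Suc k"
    show "inspan (Suc k) b (q' i)"
    proof (cases "i < k")
      case True
      have "inspan k b (q i)" using qb True by blast
      hence "inspan (Suc k) b (q i)" by (rule inspan_mono[rotated]) simp
      thus ?thesis using q'lt[OF True] by simp
    next
      case False
      hence ik: "i = k" using \<open>i < Suc k\<close> by simp
      have "inspan (Suc k) b (lc k q \<alpha>)"
      proof (rule inspan_lc)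
        fix j assume "j < k"
        hence "inspan k b (q j)" using qb by blast
        thus "inspan (Suc k) b (q j)" by (rule inspan_mono[rotated]) simp
      qed
      moreover have "inspan (Suc k) b (b k)" by (rule inspan_base) simp
      ultimately have "inspan (Suc k) b r" unfolding r_def
        by (intro inspan_add inspan_scale)
      hence "inspan (Suc k) b (\<lambda>S. (1 / s) * r S)" by (rule inspan_scale)
      thus ?thesis using ik q'k by simp
    qed
  qed
  show ?case using q'E q'on bq' qb' by blast
qed

lemma GS:
  assumes b: "\<And>i. i < N \<Longrightarrow> b i \<in> left_ideal n p"
    and indep: "\<And>c. lc N b c = (\<lambda>S. 0) \<Longrightarrow> \<forall>i<N. c i = 0"
    and span: "\<And>v. v \<in> left_ideal n p \<Longrightarrow> inspan N b v"
  shows "\<exists>q. (\<forall>i<N. q i \<in> left_ideal n p) \<and>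
      (\<forall>i<N. \<forall>j<N. ip n (q i) (q j) = (if i = j then 1 else 0)) \<and>
      (\<forall>v\<in>left_ideal n p. v = lc N q (\<lambda>i. ip n (q i) v))"
proof -
  obtain q where qE: "\<forall>i<N. q i \<in> left_ideal n p"
    and qon: "\<forall>i<N. \<forall>j<N. ip n (q i) (q j) = (if i = j then 1 else 0)"
    and bq: "\<forall>i<N. inspan N q (b i)"
    using GS_step[where N=N and b=b and n=n and p=p and k=N] b indep by blast
  have "v = lc N q (\<lambda>i. ip n (q i) v)" if v: "v \<in> left_ideal n p" for v
  proof -
    have "inspan N q v" by (rule inspan_trans[OF _ span[OF v]]) (use bq in auto)
    then obtain c where c: "v = lc N q c" unfolding inspan_def by blast
    have "(\<lambda>i. ip n (q i) v) = (\<lambda>i. if i < N then c i else ip n (q i) v)"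
      using ip_orth_lc[where k=N and q=q and n=n and c=c] qon c by auto
    hence "lc N q (\<lambda>i. ip n (q i) v) = lc N q c"
      by (simp add: lc_def)
    thus ?thesis using c by simp
  qed
  thus ?thesis using qE qon by blast
qed

lemma phi_mult:
  assumes "y \<in> Cl n"
  shows "cl_mult n (phi_at n x) y = (\<lambda>U. 1/2 * (y U + cl_mult n (xe n x) y U))"
proof
  fix U
  have "phi_at n x = (\<lambda>S. 1/2 * (cl_one S + xe n x S))"
    by (simp add: phi_at_def cl_scale_def xe_def)
  hence "cl_mult n (phi_at n x) y U = 1/2 * (cl_mult n cl_one y U + cl_mult n (xe n x) y U)"
    by (simp only: mult_scale_left mult_add_left)
  thus "cl_mult n (phi_at n x) y U = 1/2 * (y U + cl_mult n (xe n x) y U)"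
    by (simp add: mult_one_left[OF assms])
qed

lemma tensA_Cl: "u \<in> tensA n (left_ideal n p) \<Longrightarrow> u x \<in> Cl n"
  using tensA_pt LI_Cl by blast

lemma Pker_D:
  assumes "u \<in> Pker n (left_ideal n p)" "x \<in> sph n"
  shows "cl_mult n (xe n x) (u x) = (\<lambda>U. - u x U)"
proof
  fix U
  have t: "u \<in> tensA n (left_ideal n p)" and z: "Phi n u = (\<lambda>x. cl_zero)"
    using assms(1) by (auto simp: Pker_def)
  have "Phi n u x U = 0" using z by (simp add: cl_zero_def)
  hence "1/2 * (u x U + cl_mult n (xe n x) (u x) U) = 0"
    using assms(2) by (simp add: Phi_def phi_mult[OF tensA_Cl[OF t]])
  thus "cl_mult n (xe n x) (u x) U = - u x U" by simp
qed

lemma Pker_I: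
  assumes "u \<in> tensA n (left_ideal n p)"
    and "\<And>x. x \<in> sph n \<Longrightarrow> cl_mult n (xe n x) (u x) = (\<lambda>U. - u x U)"
  shows "u \<in> Pker n (left_ideal n p)"
proof -
  have "Phi n u = (\<lambda>x. cl_zero)"
  proof (intro ext)
    fix x U
    show "Phi n u x U = cl_zero U"
    proof (cases "x \<in> sph n")
      case True
      thus ?thesis by (simp add: Phi_def phi_mult[OF tensA_Cl[OF assms(1)]] assms(2) cl_zero_def)
    qed (simp add: Phi_def)
  qed
  thus ?thesis using assms(1) by (simp add: Pker_def)
qed

lemma Pker_tensA: "u \<in> Pker n E \<Longrightarrow> u \<in> tensA n E"
  by (simp add: Pker_def)

lemma ip_diff_right: "ip n a (\<lambda>S. b S - c S) = ip n a b - ip n a c"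
  by (simp add: ip_def algebra_simps sum_subtractf)

definition Yv :: "sec \<times> sec \<Rightarrow> (nat \<Rightarrow> real) \<Rightarrow> cl" where
  "Yv z x = (\<lambda>S. fst z x S + cl_tau (snd z x) S)"

definition Psi :: "nat \<Rightarrow> nat \<Rightarrow> (nat \<Rightarrow> cl) \<Rightarrow> sec \<times> sec \<Rightarrow> nat \<Rightarrow> (nat \<Rightarrow> real) \<Rightarrow> real" where
  "Psi n N q z = (\<lambda>i x. if i < N then sqrt (2 ^ Suc n) * ip n (q i) (Yv z x) else 0)"

lemma tensA_tau:
  assumes "u \<in> tensA n (left_ideal n (cl_tau p))"
  shows "(\<lambda>x. cl_tau (u x)) \<in> tensA n (left_ideal n p)"
  by (rule tensA_map[OF assms]) (auto simp: LI_tau' tau_lin)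

lemma tensA_tau':
  assumes "u \<in> tensA n (left_ideal n p)"
  shows "(\<lambda>x. cl_tau (u x)) \<in> tensA n (left_ideal n (cl_tau p))"
  by (rule tensA_map[OF assms]) (auto simp: LI_tau tau_lin)

lemma Yv_in:
  assumes "z \<in> Pker n (left_ideal n p) \<times> Pker n (left_ideal n (cl_tau p))"
  shows "Yv z x \<in> left_ideal n p"
proof -
  have "fst z x \<in> left_ideal n p" using assms tensA_pt Pker_tensA by (metis mem_Times_iff)
  moreover have "cl_tau (snd z x) \<in> left_ideal n p"
    using assms tensA_pt Pker_tensA LI_tau' by (metis mem_Times_iff)
  ultimately show ?thesis unfolding Yv_def by (rule LI_add)
qed

lemma Psi_An:
  assumes "z \<in> Pker n (left_ideal n p) \<times> Pker n (left_ideal n (cl_tau p))"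
  shows "Psi n N q z \<in> An_pow n N"
proof -
  have u: "fst z \<in> tensA n (left_ideal n p)" using assms Pker_tensA by (metis mem_Times_iff)
  have u': "(\<lambda>x. cl_tau (snd z x)) \<in> tensA n (left_ideal n p)"
    using assms Pker_tensA tensA_tau by (metis mem_Times_iff)
  have "(\<lambda>x. sqrt (2 ^ Suc n) * ip n (q i) (Yv z x)) \<in> An n" for i
  proof -
    have "(\<lambda>x. ip n (q i) (fst z x) + ip n (q i) (cl_tau (snd z x))) \<in> An n"
      by (rule An_add[OF ip_tensA[OF u] ip_tensA[OF u']])
    thus ?thesis unfolding Yv_def ip_add_right by (rule An_cmult)
  qed
  thus ?thesis unfolding An_pow_def Psi_def by auto
qed

lemma Psi_add:
  "Psi n N q ((\<lambda>x. cl_add (fst z x) (fst z' x)), (\<lambda>x. cl_add (snd z x) (snd z' x)))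
     = (\<lambda>i x. Psi n N q z i x + Psi n N q z' i x)"
proof (intro ext)
  fix i x
  have "Yv ((\<lambda>x. cl_add (fst z x) (fst z' x)), (\<lambda>x. cl_add (snd z x) (snd z' x))) x
      = (\<lambda>S. Yv z x S + Yv z' x S)"
    by (simp add: Yv_def cl_add_def cl_tau_def algebra_simps)
  thus "Psi n N q ((\<lambda>x. cl_add (fst z x) (fst z' x)), (\<lambda>x. cl_add (snd z x) (snd z' x))) i x
     = Psi n N q z i x + Psi n N q z' i x"
    by (simp add: Psi_def ip_add_right algebra_simps)
qed

lemma Psi_scale:
  "Psi n N q ((\<lambda>x. cl_scale (a x) (fst z x)), (\<lambda>x. cl_scale (a x) (snd z x)))
     = (\<lambda>i x. a x * Psi n N q z i x)"
proof (intro ext)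
  fix i x
  have "Yv ((\<lambda>x. cl_scale (a x) (fst z x)), (\<lambda>x. cl_scale (a x) (snd z x))) x
      = (\<lambda>S. a x * Yv z x S)"
    by (simp add: Yv_def cl_scale_def cl_tau_def algebra_simps)
  thus "Psi n N q ((\<lambda>x. cl_scale (a x) (fst z x)), (\<lambda>x. cl_scale (a x) (snd z x))) i x
     = a x * Psi n N q z i x"
    by (simp add: Psi_def ip_scale_right algebra_simps)
qed

lemma Psi_diff:
  "Psi n N q ((\<lambda>x S. fst z x S - fst z' x S), (\<lambda>x S. snd z x S - snd z' x S))
     = (\<lambda>i x. Psi n N q z i x - Psi n N q z' i x)"
proof (intro ext)
  fix i x
  have "Yv ((\<lambda>x S. fst z x S - fst z' x S), (\<lambda>x S. snd z x S - snd z' x S)) x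
      = (\<lambda>S. Yv z x S - Yv z' x S)"
    by (simp add: Yv_def cl_tau_def algebra_simps)
  thus "Psi n N q ((\<lambda>x S. fst z x S - fst z' x S), (\<lambda>x S. snd z x S - snd z' x S)) i x
     = Psi n N q z i x - Psi n N q z' i x"
    by (simp add: Psi_def ip_diff_right algebra_simps)
qed


lemma ip_neg_left: "ip n (\<lambda>S. - a S) b = - ip n a b"
  by (simp add: ip_def sum_negf)

lemma ip_zero_left: "ip n (\<lambda>S. 0) b = 0" by (simp add: ip_def)
lemma ip_zero_right: "ip n a (\<lambda>S. 0) = 0" by (simp add: ip_def)

lemma mult_diff_right:
  "cl_mult n a (\<lambda>S. b S - c S) U = cl_mult n a b U - cl_mult n a c U"
proof (cases "U \<subseteq> {..n}")
  case True
  thus ?thesis by (simp add: mult_eq algebra_simps sum_subtractf)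
qed (simp add: mult_out)

lemma parseval:
  assumes qexp: "\<And>v. v \<in> left_ideal n p \<Longrightarrow> v = lc N q (\<lambda>i. ip n (q i) v)"
    and Y: "Y \<in> left_ideal n p"
  shows "ip n Y Y' = (\<Sum>i<N. ip n (q i) Y * ip n (q i) Y')"
proof -
  have "ip n Y Y' = ip n Y' Y" by (rule ip_sym)
  also have "\<dots> = ip n Y' (lc N q (\<lambda>i. ip n (q i) Y))" using qexp[OF Y] by simp
  also have "\<dots> = (\<Sum>i<N. ip n (q i) Y * ip n (q i) Y')"
    unfolding ip_lc by (simp add: ip_sym[of n Y'])
  finally show ?thesis .
qed

lemma cross:
  assumes "cl_mult n (xe n x) y = (\<lambda>U. - y U)" "cl_mult n (xe n x) z = (\<lambda>U. - z U)"
  shows "ip n y (cl_tau z) = 0"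
proof -
  have "cl_tau (cl_mult n (xe n x) z) = (\<lambda>U. - cl_mult n (xe n x) (cl_tau z) U)"
    by (rule tau_xe_mult)
  hence "(\<lambda>U. - cl_tau z U) = (\<lambda>U. - cl_mult n (xe n x) (cl_tau z) U)"
    unfolding assms(2) by (simp add: cl_tau_def)
  hence xz: "cl_mult n (xe n x) (cl_tau z) = cl_tau z"
    by (metis (no_types, lifting) ext minus_equation_iff)
  have yy: "y = (\<lambda>U. - cl_mult n (xe n x) y U)" using assms(1) by simp
  have "ip n y (cl_tau z) = - ip n (cl_mult n (xe n x) y) (cl_tau z)"
    by (subst yy) (simp only: ip_neg_left)
  also have "\<dots> = - ip n y (cl_tau z)" by (simp add: ip_xe_adj xz)
  finally show ?thesis by simp
qed

lemma PP_parts: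
  assumes "z \<in> Pker n (left_ideal n p) \<times> Pker n (left_ideal n (cl_tau p))"
  shows "fst z \<in> Pker n (left_ideal n p)" "snd z \<in> Pker n (left_ideal n (cl_tau p))"
  using assms by auto

lemma cross_pt:
  assumes "u \<in> Pker n (left_ideal n p)" "u' \<in> Pker n (left_ideal n p')"
  shows "ip n (u x) (cl_tau (u' x)) = 0"
proof (cases "x \<in> sph n")
  case True
  thus ?thesis using cross Pker_D assms by blast
next
  case False
  thus ?thesis using tensA_off[OF Pker_tensA[OF assms(1)] False] by (simp add: ip_zero_left)
qed

lemma form:
  assumes qexp: "\<And>v. v \<in> left_ideal n p \<Longrightarrow> v = lc N q (\<lambda>i. ip n (q i) v)"
    and z: "z \<in> Pker n (left_ideal n p) \<times> Pker n (left_ideal n (cl_tau p))"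
    and z': "z' \<in> Pker n (left_ideal n p) \<times> Pker n (left_ideal n (cl_tau p))"
  shows "(\<lambda>x. betahat n (fst z) (fst z') x + betahat n (snd z) (snd z') x)
       = (\<lambda>x. \<Sum>i<N. Psi n N q z i x * Psi n N q z' i x)"
proof
  fix x
  note P = PP_parts[OF z] PP_parts[OF z']
  have c1: "ip n (fst z x) (cl_tau (snd z' x)) = 0" by (rule cross_pt[OF P(1) P(4)])
  have c2: "ip n (cl_tau (snd z x)) (fst z' x) = 0"
    using cross_pt[OF P(3) P(2)] ip_sym by metis
  have "(\<Sum>i<N. Psi n N q z i x * Psi n N q z' i x)
      = (\<Sum>i<N. sqrt (2 ^ Suc n) * sqrt (2 ^ Suc n) * (ip n (q i) (Yv z x) * ip n (q i) (Yv z' x)))"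
    by (rule sum.cong) (simp_all add: Psi_def)
  also have "\<dots> = 2 ^ Suc n * ip n (Yv z x) (Yv z' x)"
    by (simp add: parseval[OF qexp Yv_in[OF z]] sum_distrib_left)
  also have "ip n (Yv z x) (Yv z' x) = ip n (fst z x) (fst z' x) + ip n (snd z x) (snd z' x)"
    unfolding Yv_def ip_add_left ip_add_right ip_tau c1 c2 by simp
  finally show "betahat n (fst z) (fst z') x + betahat n (snd z) (snd z') x
       = (\<Sum>i<N. Psi n N q z i x * Psi n N q z' i x)"
    by (simp add: betahat_def beta_ip algebra_simps)
qed

lemma Pker_diff:
  assumes "u \<in> Pker n (left_ideal n p)" "u' \<in> Pker n (left_ideal n p)"
  shows "(\<lambda>x S. u x S - u' x S) \<in> Pker n (left_ideal n p)"
proof (rule Pker_I)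
  show "(\<lambda>x S. u x S - u' x S) \<in> tensA n (left_ideal n p)"
    by (rule tensA_diff[OF Pker_tensA[OF assms(1)] Pker_tensA[OF assms(2)]])
next
  fix x assume x: "x \<in> sph n"
  show "cl_mult n (xe n x) (\<lambda>S. u x S - u' x S) = (\<lambda>U. - (u x U - u' x U))"
    by (rule ext) (simp add: mult_diff_right Pker_D[OF assms(1) x] Pker_D[OF assms(2) x])
qed

lemma Psi_inj:
  assumes qexp: "\<And>v. v \<in> left_ideal n p \<Longrightarrow> v = lc N q (\<lambda>i. ip n (q i) v)"
  shows "inj_on (Psi n N q) (Pker n (left_ideal n p) \<times> Pker n (left_ideal n (cl_tau p)))"
proof (rule inj_onI)
  fix z z' assume z: "z \<in> Pker n (left_ideal n p) \<times> Pker n (left_ideal n (cl_tau p))"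
    and z': "z' \<in> Pker n (left_ideal n p) \<times> Pker n (left_ideal n (cl_tau p))"
    and e: "Psi n N q z = Psi n N q z'"
  define d where "d = ((\<lambda>x S. fst z x S - fst z' x S), (\<lambda>x S. snd z x S - snd z' x S))"
  note P = PP_parts[OF z] PP_parts[OF z']
  have dP: "d \<in> Pker n (left_ideal n p) \<times> Pker n (left_ideal n (cl_tau p))"
    unfolding d_def using Pker_diff[OF P(1) P(3)] Pker_diff[OF P(2) P(4)] by simp
  have "Psi n N q d = (\<lambda>i x. 0)" unfolding d_def Psi_diff e by simp
  hence F: "betahat n (fst d) (fst d) x + betahat n (snd d) (snd d) x = 0" for x
    using fun_cong[OF form[OF qexp dP dP], of x] by simp
  have "fst d x = (\<lambda>S. 0) \<and> snd d x = (\<lambda>S. 0)" for x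
  proof -
    have "2 ^ Suc n * ip n (fst d x) (fst d x) + 2 ^ Suc n * ip n (snd d x) (snd d x) = 0"
      using F[of x] by (simp add: betahat_def beta_ip)
    moreover have "0 \<le> ip n (fst d x) (fst d x)" "0 \<le> ip n (snd d x) (snd d x)"
      by (rule ip_self_nonneg)+
    ultimately have "(2::real) ^ Suc n * ip n (fst d x) (fst d x) = 0" "(2::real) ^ Suc n * ip n (snd d x) (snd d x) = 0"
      by (smt (verit) mult_nonneg_nonneg zero_le_power)+
    hence "ip n (fst d x) (fst d x) = 0" "ip n (snd d x) (snd d x) = 0" by simp_all
    moreover have "fst d x \<in> Cl n" by (rule tensA_Cl[OF Pker_tensA[OF PP_parts(1)[OF dP]]])
    moreover have "snd d x \<in> Cl n" by (rule tensA_Cl[OF Pker_tensA[OF PP_parts(2)[OF dP]]])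
    ultimately show ?thesis using ip_self_zero by blast
  qed
  hence "fst d x S = 0" "snd d x S = 0" for x S by simp_all
  hence "fst z x S = fst z' x S" "snd z x S = snd z' x S" for x S
    unfolding d_def by simp_all
  thus "z = z'" by (intro prod_eqI ext) auto
qed


lemma sph_sum: "x \<in> sph n \<Longrightarrow> (\<Sum>i\<le>n. (x i)^2) = 1"
  by (simp add: sph_def)

lemma Psi_surj:
  assumes qE: "\<And>i. i < N \<Longrightarrow> q i \<in> left_ideal n p"
    and qon: "\<And>i j. i < N \<Longrightarrow> j < N \<Longrightarrow> ip n (q i) (q j) = (if i = j then 1 else 0)"
    and v: "v \<in> An_pow n N"
  shows "\<exists>z \<in> Pker n (left_ideal n p) \<times> Pker n (left_ideal n (cl_tau p)). Psi n N q z = v"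
proof -
  define c0 where "c0 = sqrt (2 ^ Suc n)"
  have c0pos: "c0 > 0" by (simp add: c0_def)
  have vA: "\<And>i. i < N \<Longrightarrow> v i \<in> An n" and v0: "\<And>i. i \<ge> N \<Longrightarrow> v i = (\<lambda>x. 0)"
    using v by (auto simp: An_pow_def)
  define t where "t = (\<lambda>x S. \<Sum>i<N. (1/c0 * v i x) * q i S)"
  have "(\<lambda>x S. (1/c0 * v i x) * q i S) \<in> tensA n (left_ideal n p)" if "i < N" for i
    by (rule tensA_elem[where a = "\<lambda>x. 1/c0 * v i x"], rule An_cmult[OF vA[OF that]], rule qE[OF that])
  hence tT: "t \<in> tensA n (left_ideal n p)"
    unfolding t_def using tensA_sum[OF finite_lessThan, of N "\<lambda>i x S. (1/c0 * v i x) * q i S"] by simp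
  define w where "w = (\<lambda>x. cl_mult n (xe n x) (t x))"
  have wT: "w \<in> tensA n (left_ideal n p)" unfolding w_def by (rule tensA_xe[OF tT])
  define u where "u = (\<lambda>x S. 1/2 * (t x S - w x S))"
  define s where "s = (\<lambda>x S. 1/2 * (t x S + w x S))"
  define u' where "u' = (\<lambda>x. cl_tau (s x))"
  have uT: "u \<in> tensA n (left_ideal n p)"
    unfolding u_def by (rule tensA_cscale[OF tensA_diff[OF tT wT]])
  have sT: "s \<in> tensA n (left_ideal n p)"
    unfolding s_def by (rule tensA_cscale[OF tensA_add[OF tT wT]])
  have u'T: "u' \<in> tensA n (left_ideal n (cl_tau p))"
    unfolding u'_def by (rule tensA_tau'[OF sT])
  have xw: "cl_mult n (xe n x) (w x) = t x" if x: "x \<in> sph n" for x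
    unfolding w_def xe_xe[OF tensA_Cl[OF tT]] sph_sum[OF x] by simp
  have xu: "cl_mult n (xe n x) (u x) = (\<lambda>U. - u x U)" if x: "x \<in> sph n" for x
  proof
    fix U
    have "cl_mult n (xe n x) (u x) U = 1/2 * (cl_mult n (xe n x) (t x) U - cl_mult n (xe n x) (w x) U)"
      unfolding u_def by (simp only: mult_scale_right mult_diff_right)
    thus "cl_mult n (xe n x) (u x) U = - u x U"
      unfolding xw[OF x] by (simp only: u_def w_def) (simp add: algebra_simps)
  qed
  have xs: "cl_mult n (xe n x) (s x) = s x" if x: "x \<in> sph n" for x
  proof
    fix U
    have "cl_mult n (xe n x) (s x) U = 1/2 * (cl_mult n (xe n x) (t x) U + cl_mult n (xe n x) (w x) U)"
      unfolding s_def by (simp only: mult_scale_right mult_add_right)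
    thus "cl_mult n (xe n x) (s x) U = s x U"
      unfolding xw[OF x] by (simp add: s_def w_def)
  qed
  have xu': "cl_mult n (xe n x) (u' x) = (\<lambda>U. - u' x U)" if x: "x \<in> sph n" for x
  proof -
    have "cl_tau (cl_mult n (xe n x) (s x)) = (\<lambda>U. - cl_mult n (xe n x) (cl_tau (s x)) U)"
      by (rule tau_xe_mult)
    hence "cl_tau (s x) = (\<lambda>U. - cl_mult n (xe n x) (cl_tau (s x)) U)" unfolding xs[OF x] .
    thus ?thesis unfolding u'_def by (metis (no_types, lifting) ext minus_equation_iff)
  qed
  have uP: "u \<in> Pker n (left_ideal n p)" by (rule Pker_I[OF uT xu])
  have u'P: "u' \<in> Pker n (left_ideal n (cl_tau p))" by (rule Pker_I[OF u'T xu'])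
  have "Psi n N q (u, u') = v"
  proof (intro ext)
    fix i x
    show "Psi n N q (u, u') i x = v i x"
    proof (cases "i < N")
      case True
      have Y: "Yv (u, u') x = t x" by (rule ext) (simp add: Yv_def u'_def u_def s_def field_simps)
      have "ip n (q i) (t x) = (\<Sum>j<N. (1/c0 * v j x) * ip n (q i) (q j))"
        unfolding t_def ip_sum_right[OF finite_lessThan] ip_scale_right by (rule refl)
      also have "\<dots> = (\<Sum>j<N. if j = i then 1/c0 * v i x else 0)"
        by (rule sum.cong) (use True qon in auto)
      also have "\<dots> = 1/c0 * v i x" using True by simp
      finally have "ip n (q i) (t x) = 1/c0 * v i x" .
      hence "Psi n N q (u, u') i x = c0 * (1/c0 * v i x)" using True by (simp add: Psi_def Y c0_def)
      thus ?thesis using c0pos by simp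
    next
      case False
      thus ?thesis using v0[of i] by (simp add: Psi_def)
    qed
  qed
  thus ?thesis using uP u'P by blast
qed

theorem mainTheorem9:
  fixes n N :: nat and p :: cl
  assumes "n mod 4 = 0" and "n \<ge> 4"
    and "primitive_idem n p"
    and "p \<in> left_ideal n (hbar_plus n)"
    and "has_real_dim (left_ideal n p) N"
  shows "orth_sum_isometric_trivial n
           (Pker n (left_ideal n p)) (Pker n (left_ideal n (cl_tau p))) N"
proof -
  obtain b where b: "\<forall>i<N. b i \<in> left_ideal n p"
    and bind: "\<forall>c. (\<lambda>S. \<Sum>i<N. c i * b i S) = cl_zero \<longrightarrow> (\<forall>i<N. c i = 0)"
    and bspan: "\<forall>v\<in>left_ideal n p. \<exists>c. v = (\<lambda>S. \<Sum>i<N. c i * b i S)"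
    using assms(5) unfolding has_real_dim_def by blast
  have "\<exists>q. (\<forall>i<N. q i \<in> left_ideal n p) \<and>
      (\<forall>i<N. \<forall>j<N. ip n (q i) (q j) = (if i = j then 1 else 0)) \<and>
      (\<forall>v\<in>left_ideal n p. v = lc N q (\<lambda>i. ip n (q i) v))"
  proof (rule GS)
    show "\<And>i. i < N \<Longrightarrow> b i \<in> left_ideal n p" using b by blast
    show "\<And>c. lc N b c = (\<lambda>S. 0) \<Longrightarrow> \<forall>i<N. c i = 0" using bind by (simp add: lc_def cl_zero_def)
    show "\<And>v. v \<in> left_ideal n p \<Longrightarrow> inspan N b v" using bspan by (simp add: inspan_def lc_def)
  qed
  then obtain q where qE: "\<forall>i<N. q i \<in> left_ideal n p"
    and qon: "\<forall>i<N. \<forall>j<N. ip n (q i) (q j) = (if i = j then 1 else 0)"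
    and qexp: "\<forall>v\<in>left_ideal n p. v = lc N q (\<lambda>i. ip n (q i) v)" by blast
  let ?PP = "Pker n (left_ideal n p) \<times> Pker n (left_ideal n (cl_tau p))"
  have qexp': "\<And>v. v \<in> left_ideal n p \<Longrightarrow> v = lc N q (\<lambda>i. ip n (q i) v)" using qexp by blast
  have bij: "bij_betw (Psi n N q) ?PP (An_pow n N)"
    unfolding bij_betw_def
  proof
    show "inj_on (Psi n N q) ?PP" by (rule Psi_inj[OF qexp'])
    show "Psi n N q ` ?PP = An_pow n N"
    proof
      show "Psi n N q ` ?PP \<subseteq> An_pow n N" using Psi_An by blast
      show "An_pow n N \<subseteq> Psi n N q ` ?PP"
      proof
        fix v assume "v \<in> An_pow n N"
        then obtain z where "z \<in> ?PP" "Psi n N q z = v"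
          using Psi_surj[of N q n p v] qE qon by blast
        thus "v \<in> Psi n N q ` ?PP" by blast
      qed
    qed
  qed
  show ?thesis
    unfolding orth_sum_isometric_trivial_def
    using bij Psi_add Psi_scale form[OF qexp'] by blast
qed

end
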